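(* Each of the following two sets of $8\times 8$ matrices is a minimal generating set for $\mathrm{O}(8,\mathbb{D})$ (it generates $\mathrm{O}(8,\mathbb{D})$ and no proper subset of it generates $\mathrm{O}(8,\mathbb{D})$): (1) $\Sigma_K=\{X_0,\ CX_{0,1},\ CCX_{1,2},\ K_{[0,1,2,3]}\}$; (2) $\Sigma_Z=\{X_0,\ CX_{0,1},\ CCX_{1,2},\ K_{1,2},\ CCZ\}$.
   Context: $\mathbb{D}=\mathbb{Z}[1/2]$ and $\mathrm{O}(8,\mathbb{D})$ is the group of $8\times8$ orthogonal matrices with entries in $\mathbb{D}$. Qubits are labelled $0,1,2$; $|x_0x_1x_2\rangle$ is identified with the standard basis vector $e_{4x_0+2x_1+x_2}$ of $\mathbb{R}^8$. $X=\begin{bmatrix}0&1\\1&0\end{bmatrix}$, $H=\frac1{\sqrt2}\begin{bmatrix}1&1\\1&-1\end{bmatrix}$. $X_0=X\otimes I\otimes I$; $CX_{0,1}$ sends $|x_0x_1x_2\rangle$ to $|x_0,x_1\oplus x_0,x_2\rangle$; $CCX_{1,2}$ sends $|x_0x_1x_2\rangle$ to $|x_0\oplus x_1x_2,x_1,x_2\rangle$; $K_{1,2}=I\otimes H\otimes H$; $CCZ$ is the diagonal matrix with $-1$ in the entry of $|111\rangle=e_7$ and $1$ elsewhere; $K_{[0,1,2,3]}$ is the matrix acting as $H\otimes H$ on $\mathrm{span}(e_0,e_1,e_2,e_3)$ and as the identity on $\mathrm{span}(e_4,\dots,e_7)$ (i.e. $K_{1,2}$ applied when qubit $0$ is in state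 $|0\rangle$). *)

theory Defs
  imports "HOL-Analysis.Analysis"
begin

text \<open>Basis index of a row/column (type 8 has elements 0..7; e_k has index k).\<close>
definition idx :: "8 \<Rightarrow> nat" where
  "idx i = nat (Rep_bit0 i)"

text \<open>Bit of qubit q (q = 0 most significant) of k = 4 x0 + 2 x1 + x2.\<close>
definition qbit :: "nat \<Rightarrow> nat \<Rightarrow> nat" where
  "qbit q k = (k div 2 ^ (2 - q)) mod 2"

definition dyadic :: "real \<Rightarrow> bool" where
  "dyadic x \<longleftrightarrow> (\<exists>a::int. \<exists>k::nat. x = of_int a / 2 ^ k)"

definition O8D :: "(real^8^8) set" where
  "O8D = {A. orthogonal_matrix A \<and> (\<forall>i j. dyadic (A $ i $ j))}"

inductive_set gen_group :: "(real^8^8) set \<Rightarrow> (real^8^8) set" for S where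
  gen_base: "A \<in> S \<Longrightarrow> A \<in> gen_group S"
| gen_one: "mat 1 \<in> gen_group S"
| gen_mult: "A \<in> gen_group S \<Longrightarrow> B \<in> gen_group S \<Longrightarrow> A ** B \<in> gen_group S"
| gen_inv: "A \<in> gen_group S \<Longrightarrow> matrix_inv A \<in> gen_group S"

definition perm_mat :: "(nat \<Rightarrow> nat) \<Rightarrow> real^8^8" where
  "perm_mat p = (\<chi> i j. if idx i = p (idx j) then 1 else 0)"

definition X0 :: "real^8^8" where
  "X0 = perm_mat (\<lambda>k. 4 * (1 - qbit 0 k) + 2 * qbit 1 k + qbit 2 k)"

definition CX01 :: "real^8^8" where
  "CX01 = perm_mat (\<lambda>k. if qbit 0 k = 1 then 4 + 2 * (1 - qbit 1 k) + qbit 2 k else k)"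

definition CCX12 :: "real^8^8" where
  "CCX12 = perm_mat (\<lambda>k. if qbit 1 k = 1 \<and> qbit 2 k = 1 then 4 * (1 - qbit 0 k) + 3 else k)"

text \<open>Entry of H \<otimes> H acting on qubits 1,2.\<close>
definition hh :: "nat \<Rightarrow> nat \<Rightarrow> real" where
  "hh r c = (-1) ^ (qbit 1 r * qbit 1 c + qbit 2 r * qbit 2 c) / 2"

definition K12 :: "real^8^8" where
  "K12 = (\<chi> i j. if qbit 0 (idx i) = qbit 0 (idx j) then hh (idx i) (idx j) else 0)"

definition K0123 :: "real^8^8" where
  "K0123 = (\<chi> i j. if idx i < 4 \<and> idx j < 4 then hh (idx i) (idx j)
                    else if idx i = idx j then 1 else 0)"

definition CCZ :: "real^8^8" where
  "CCZ = (\<chi> i j. if idx i = idx j then (if idx i = 7 then -1 else 1) else 0)"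

definition minimal_generating_set :: "(real^8^8) set \<Rightarrow> (real^8^8) set \<Rightarrow> bool" where
  "minimal_generating_set S G \<longleftrightarrow> gen_group S = G \<and> (\<forall>T. T \<subset> S \<longrightarrow> gen_group T \<noteq> G)"

end

theory Submission
  imports Defs
begin

lemma lt8: "{..<8::nat} = {0,1,2,3,4,5,6,7}"
  by (auto simp: numeral_eq_Suc less_Suc_eq)
lemma all8: "(\<forall>n<8. P n) \<longleftrightarrow> P 0 \<and> P 1 \<and> P 2 \<and> P 3 \<and> P 4 \<and> P 5 \<and> P 6 \<and> P (7::nat)"
proof -
  have "(\<forall>n<8. P n) \<longleftrightarrow> (\<forall>n\<in>{..<8::nat}. P n)" by auto
  also have "\<dots> \<longleftrightarrow> P 0 \<and> P 1 \<and> P 2 \<and> P 3 \<and> P 4 \<and> P 5 \<and> P 6 \<and> P (7::nat)" unfolding lt8 by simp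
  finally show ?thesis .
qed
lemma sum8e: "(\<Sum>k<8. h k) = h 0 + h 1 + h 2 + h 3 + h 4 + h 5 + h 6 + h (7::nat)"
  unfolding lt8 by (simp add: add.assoc)


definition ix :: "nat \<Rightarrow> 8" where "ix n = Abs_bit0 (int n)"

lemma Rep8_range: "0 \<le> Rep_bit0 (i::8) \<and> Rep_bit0 i < 8"
  using Rep_bit0[of i] by simp

lemma idx_lt [simp]: "idx i < 8"
  using Rep8_range[of i] unfolding idx_def by linarith

lemma ix_idx [simp]: "ix (idx i) = i"
  using Rep8_range[of i] unfolding idx_def ix_def by (simp add: bit0.Rep_inverse)

lemma idx_ix [simp]: "n < 8 \<Longrightarrow> idx (ix n) = n"
  unfolding idx_def ix_def by (simp add: bit0.Abs_inverse)

lemma idx_inj: "idx i = idx j \<longleftrightarrow> i = j"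
  by (metis ix_idx)

lemma bij_idx: "bij_betw idx (UNIV::8 set) {..<8}"
  unfolding bij_betw_def inj_on_def
proof (intro conjI allI impI ballI)
  show "idx ` UNIV = {..<8}"
  proof
    show "{..<8} \<subseteq> idx ` UNIV"
    proof
      fix n assume "n \<in> {..<(8::nat)}"
      then have "idx (ix n) = n" by simp
      then show "n \<in> idx ` UNIV" by (metis rangeI)
    qed
  qed auto
qed (simp add: idx_inj)

lemma sum8: "(\<Sum>k\<in>(UNIV::8 set). h (idx k)) = (\<Sum>k<8. h k)"
  using sum.reindex_bij_betw[OF bij_idx, of h] .


definition mk :: "(nat \<Rightarrow> nat \<Rightarrow> real) \<Rightarrow> real^8^8" where
  "mk f = (\<chi> i j. f (idx i) (idx j))"
definition fmul :: "(nat \<Rightarrow> nat \<Rightarrow> real) \<Rightarrow> (nat \<Rightarrow> nat \<Rightarrow> real) \<Rightarrow> nat \<Rightarrow> nat \<Rightarrow> real" where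
  "fmul f g = (\<lambda>r c. \<Sum>k<8. f r k * g k c)"
definition tb :: "real list list \<Rightarrow> nat \<Rightarrow> nat \<Rightarrow> real" where
  "tb L r c = L ! r ! c"

lemma mk_entry [simp]: "mk f $ i $ j = f (idx i) (idx j)"
  by (simp add: mk_def)

lemma mk_eqI: "(\<And>r c. r < 8 \<Longrightarrow> c < 8 \<Longrightarrow> f r c = g r c) \<Longrightarrow> mk f = mk g"
  by (simp add: mk_def vec_eq_iff)

lemma mk_eq_all: "(\<forall>r<8. \<forall>c<8. f r c = g r c) \<Longrightarrow> mk f = mk g"
  by (rule mk_eqI) auto

lemma mk_mult: "mk f ** mk g = mk (fmul f g)"
  by (simp add: matrix_matrix_mult_def mk_def fmul_def vec_eq_iff sum8[where h="\<lambda>k. f _ k * g k _"])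

lemma perm_mat_mk: "perm_mat p = mk (\<lambda>r c. if r = p c then 1 else 0)"
  by (simp add: perm_mat_def mk_def)
lemma mat1_mk: "mat 1 = mk (\<lambda>r c. if r = c then 1 else 0)"
  by (simp add: mk_def mat_def vec_eq_iff idx_inj)
lemma mk_of: "A = mk (\<lambda>r c. A $ ix r $ ix c)"
  by (simp add: mk_def vec_eq_iff)
lemma mk_transpose: "transpose (mk f) = mk (\<lambda>r c. f c r)"
  by (simp add: mk_def transpose_def vec_eq_iff)

definition pl :: "nat list \<Rightarrow> nat \<Rightarrow> nat" where "pl L c = L ! c"

lemma perm_mat_comp:
  assumes "\<forall>c<8. q c < 8"
  shows "perm_mat p ** perm_mat q = perm_mat (\<lambda>c. p (q c))"
proof -
  have "fmul (\<lambda>r c. if r = p c then 1 else 0) (\<lambda>r c. if r = q c then 1 else 0) r c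
        = (if r = p (q c) then 1 else 0)" if "c < 8" for r c
  proof -
    have "fmul (\<lambda>r c. if r = p c then 1 else 0) (\<lambda>r c. if r = q c then 1 else 0) r c
        = (\<Sum>k<8. if k = q c then (if r = p k then 1 else 0) else (0::real))"
      unfolding fmul_def by (intro sum.cong) auto
    also have "\<dots> = (if r = p (q c) then 1 else 0)"
      using assms that by (simp add: sum.delta')
    finally show ?thesis .
  qed
  then show ?thesis unfolding perm_mat_mk mk_mult by (intro mk_eqI) auto
qed

lemma perm_mat_cong: "\<forall>c<8. p c = q c \<Longrightarrow> perm_mat p = perm_mat q"
  unfolding perm_mat_mk by (intro mk_eqI) auto

lemma perm_mat_id: "perm_mat (\<lambda>c. c) = mat 1"
  unfolding perm_mat_mk mat1_mk by (intro mk_eqI) auto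

definition closedG :: "(real^8^8) set \<Rightarrow> bool" where
  "closedG G \<longleftrightarrow> mat 1 \<in> G \<and> (\<forall>A\<in>G. \<forall>B\<in>G. A ** B \<in> G) \<and> (\<forall>A\<in>G. matrix_inv A \<in> G)"

lemma closedG_gen: "closedG (gen_group S)"
  by (auto simp: closedG_def intro: gen_group.intros)

lemma gen_least:
  assumes "closedG H" "S \<subseteq> H" shows "gen_group S \<subseteq> H"
proof
  fix x assume "x \<in> gen_group S"
  then show "x \<in> H" by induction (use assms in \<open>auto simp: closedG_def\<close>)
qed

lemma gen_mono: "T \<subseteq> S \<Longrightarrow> gen_group T \<subseteq> gen_group S"
  by (rule gen_least[OF closedG_gen]) (auto intro: gen_base)

lemma closedG_mult: "closedG G \<Longrightarrow> A \<in> G \<Longrightarrow> B \<in> G \<Longrightarrow> A ** B \<in> G"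
  by (simp add: closedG_def)
lemma closedG_inv: "closedG G \<Longrightarrow> A \<in> G \<Longrightarrow> matrix_inv A \<in> G"
  by (simp add: closedG_def)
lemma closedG_one: "closedG G \<Longrightarrow> mat 1 \<in> G"
  by (simp add: closedG_def)

lemma orth_inv:
  assumes "orthogonal_matrix A" shows "matrix_inv A = transpose A"
proof -
  have ex: "\<exists>A'. A ** A' = mat 1 \<and> A' ** A = mat 1"
    using assms by (auto simp: orthogonal_matrix_def)
  define B where "B = matrix_inv A"
  have B: "A ** B = mat 1 \<and> B ** A = mat 1"
    unfolding B_def matrix_inv_def using someI_ex[OF ex] .
  have "B = B ** (A ** transpose A)" using assms by (simp add: orthogonal_matrix_def)
  also have "\<dots> = (B ** A) ** transpose A" by (simp add: matrix_mul_assoc)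
  also have "\<dots> = transpose A" using B by simp
  finally show ?thesis by (simp add: B_def)
qed

fun wp :: "nat list list \<Rightarrow> nat list \<Rightarrow> nat list" where
  "wp gl [] = [0..<8]"
| "wp gl (i # w) = map (\<lambda>k. gl ! i ! k) (wp gl w)"

definition okp :: "nat list \<Rightarrow> bool" where
  "okp L \<longleftrightarrow> length L = 8 \<and> (\<forall>c<8. L ! c < 8)"

lemma wp_ok: "\<forall>i<length gl. okp (gl ! i) \<Longrightarrow> set w \<subseteq> {..<length gl} \<Longrightarrow> okp (wp gl w)"
  by (induction w) (auto simp: okp_def)

lemma wp_G:
  assumes G: "closedG G" and gl: "\<forall>i<length gl. okp (gl ! i) \<and> perm_mat (pl (gl ! i)) \<in> G"
  shows "set w \<subseteq> {..<length gl} \<Longrightarrow> perm_mat (pl (wp gl w)) \<in> G"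
proof (induction w)
  case Nil
  have "perm_mat (pl (wp gl [])) = perm_mat (\<lambda>c. c)"
    by (rule perm_mat_cong) (simp add: pl_def)
  then show ?case using closedG_one[OF G] perm_mat_id by simp
next
  case (Cons i w)
  have ok: "okp (wp gl w)" using wp_ok gl Cons.prems by auto
  have "perm_mat (pl (wp gl (i # w))) = perm_mat (pl (gl ! i)) ** perm_mat (pl (wp gl w))"
    using ok by (subst perm_mat_comp) (auto simp: okp_def pl_def intro!: perm_mat_cong)
  then show ?case using Cons gl closedG_mult[OF G] by auto
qed

definition swf :: "nat \<Rightarrow> nat \<Rightarrow> nat \<Rightarrow> nat" where
  "swf a b c = (if c = a then b else if c = b then a else c)"
definition Sw :: "nat \<Rightarrow> nat \<Rightarrow> real^8^8" where
  "Sw a b = perm_mat (swf a b)"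

lemma Sw_conj:
  assumes "a < 8" "b < 8" "a \<noteq> 0" "b \<noteq> 0" "a \<noteq> b"
  shows "Sw a b = Sw 0 a ** Sw 0 b ** Sw 0 a"
  unfolding Sw_def using assms
  by (subst perm_mat_comp, simp add: swf_def, subst perm_mat_comp, simp add: swf_def)
     (rule perm_mat_cong, auto simp: swf_def)

lemma Sw_G:
  assumes G: "closedG G" and h: "\<forall>n. 0 < n \<and> n < 8 \<longrightarrow> Sw 0 n \<in> G" and ab: "a < 8" "b < 8"
  shows "Sw a b \<in> G"
proof -
  have "Sw a a = mat 1" unfolding Sw_def by (subst perm_mat_id[symmetric], rule perm_mat_cong) (simp add: swf_def)
  moreover have "Sw a 0 = Sw 0 a" unfolding Sw_def by (rule perm_mat_cong) (simp add: swf_def)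
  ultimately show ?thesis using h ab G Sw_conj[of a b]
    by (cases "a = b"; cases "a = 0"; cases "b = 0") (auto intro!: closedG_mult closedG_one)
qed

lemma dyadic_int [simp]: "dyadic (of_int a)"
  unfolding dyadic_def by (rule exI[of _ a], rule exI[of _ 0]) simp
lemma dyadic_0 [simp]: "dyadic 0" using dyadic_int[of 0] by simp
lemma dyadic_1 [simp]: "dyadic 1" using dyadic_int[of 1] by simp
lemma dyadic_m1 [simp]: "dyadic (-1)" using dyadic_int[of "-1"] by simp
lemma dyadic_half [simp]: "dyadic (1/2)"
  unfolding dyadic_def by (rule exI[of _ 1], rule exI[of _ 1]) simp
lemma dyadic_mhalf [simp]: "dyadic (-(1/2))"
  unfolding dyadic_def by (rule exI[of _ "-1"], rule exI[of _ 1]) simp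
lemma dyadic_mhalf' [simp]: "dyadic (-1/2)"
  unfolding dyadic_def by (rule exI[of _ "-1"], rule exI[of _ 1]) simp
lemma dyadic_add: assumes "dyadic x" "dyadic y" shows "dyadic (x + y)"
proof -
  obtain a k b l where x: "x = of_int a / 2^k" and y: "y = of_int b / 2^l"
    using assms unfolding dyadic_def by blast
  have "x + y = of_int (a * 2^l + b * 2^k) / 2^(k+l)"
    unfolding x y by (simp add: field_simps power_add)
  then show ?thesis unfolding dyadic_def by blast
qed
lemma dyadic_mult: assumes "dyadic x" "dyadic y" shows "dyadic (x * y)"
proof -
  obtain a k b l where x: "x = of_int a / 2^k" and y: "y = of_int b / 2^l"
    using assms unfolding dyadic_def by blast
  have "x * y = of_int (a * b) / 2^(k+l)"
    unfolding x y by (simp add: field_simps power_add)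
  then show ?thesis unfolding dyadic_def by blast
qed
lemma dyadic_sum: "(\<And>x. x \<in> A \<Longrightarrow> dyadic (f x)) \<Longrightarrow> dyadic (sum f A)"
proof (induction A rule: infinite_finite_induct)
  case (insert x F) then show ?case by (simp add: dyadic_add)
qed auto

lemma O8D_mult: assumes "A \<in> O8D" "B \<in> O8D" shows "A ** B \<in> O8D"
proof -
  have "orthogonal_matrix (A ** B)" using assms orthogonal_matrix_mul unfolding O8D_def by blast
  moreover have "dyadic ((A ** B) $ i $ j)" for i j
    using assms unfolding O8D_def matrix_matrix_mult_def by (auto intro!: dyadic_sum dyadic_mult)
  ultimately show ?thesis unfolding O8D_def by blast
qed

lemma O8D_transpose: "A \<in> O8D \<Longrightarrow> transpose A \<in> O8D"
proof -
  assume a: "A \<in> O8D"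
  then have "orthogonal_matrix (transpose A)" unfolding O8D_def by simp
  moreover have "dyadic (transpose A $ i $ j)" for i j using a unfolding O8D_def transpose_def by simp
  ultimately show ?thesis unfolding O8D_def by blast
qed

lemma O8D_one: "mat 1 \<in> O8D"
proof -
  have "dyadic (mat 1 $ i $ j :: real)" for i j :: 8 by (simp add: mat_def)
  then show ?thesis unfolding O8D_def using orthogonal_matrix_id by blast
qed

lemma closedG_O8D: "closedG O8D"
proof -
  have "matrix_inv A \<in> O8D" if "A \<in> O8D" for A
    using that orth_inv[of A] O8D_transpose[of A] unfolding O8D_def by auto
  then show ?thesis unfolding closedG_def using O8D_mult O8D_one by blast
qed

lemma tb_O8D:
  assumes "\<forall>r<8. \<forall>c<8. fmul (\<lambda>r c. tb L c r) (tb L) r c = (if r = c then 1 else 0)"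
    and "\<forall>r<8. \<forall>c<8. dyadic (tb L r c)"
  shows "mk (tb L) \<in> O8D"
proof -
  have "transpose (mk (tb L)) ** mk (tb L) = mat 1"
    unfolding mk_transpose mk_mult mat1_mk using assms(1) by (intro mk_eqI) auto
  then show ?thesis using assms(2) unfolding O8D_def orthogonal_matrix by auto
qed

definition tX0 :: "real list list" where "tX0 = [[0,0,0,0,1,0,0,0],[0,0,0,0,0,1,0,0],[0,0,0,0,0,0,1,0],[0,0,0,0,0,0,0,1],[1,0,0,0,0,0,0,0],[0,1,0,0,0,0,0,0],[0,0,1,0,0,0,0,0],[0,0,0,1,0,0,0,0]]"
definition tCX01 :: "real list list" where "tCX01 = [[1,0,0,0,0,0,0,0],[0,1,0,0,0,0,0,0],[0,0,1,0,0,0,0,0],[0,0,0,1,0,0,0,0],[0,0,0,0,0,0,1,0],[0,0,0,0,0,0,0,1],[0,0,0,0,1,0,0,0],[0,0,0,0,0,1,0,0]]"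
definition tCCX12 :: "real list list" where "tCCX12 = [[1,0,0,0,0,0,0,0],[0,1,0,0,0,0,0,0],[0,0,1,0,0,0,0,0],[0,0,0,0,0,0,0,1],[0,0,0,0,1,0,0,0],[0,0,0,0,0,1,0,0],[0,0,0,0,0,0,1,0],[0,0,0,1,0,0,0,0]]"
definition tK0123 :: "real list list" where "tK0123 = [[1/2,1/2,1/2,1/2,0,0,0,0],[1/2,- 1/2,1/2,- 1/2,0,0,0,0],[1/2,1/2,- 1/2,- 1/2,0,0,0,0],[1/2,- 1/2,- 1/2,1/2,0,0,0,0],[0,0,0,0,1,0,0,0],[0,0,0,0,0,1,0,0],[0,0,0,0,0,0,1,0],[0,0,0,0,0,0,0,1]]"
definition tK12 :: "real list list" where "tK12 = [[1/2,1/2,1/2,1/2,0,0,0,0],[1/2,- 1/2,1/2,- 1/2,0,0,0,0],[1/2,1/2,- 1/2,- 1/2,0,0,0,0],[1/2,- 1/2,- 1/2,1/2,0,0,0,0],[0,0,0,0,1/2,1/2,1/2,1/2],[0,0,0,0,1/2,- 1/2,1/2,- 1/2],[0,0,0,0,1/2,1/2,- 1/2,- 1/2],[0,0,0,0,1/2,- 1/2,- 1/2,1/2]]"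
definition tCCZ :: "real list list" where "tCCZ = [[1,0,0,0,0,0,0,0],[0,1,0,0,0,0,0,0],[0,0,1,0,0,0,0,0],[0,0,0,1,0,0,0,0],[0,0,0,0,1,0,0,0],[0,0,0,0,0,1,0,0],[0,0,0,0,0,0,1,0],[0,0,0,0,0,0,0,- 1]]"

lemmas tdefs = tX0_def tCX01_def tCCX12_def tK0123_def tK12_def tCCZ_def
lemma X0_tb: "X0 = mk (tb tX0)"
  unfolding X0_def perm_mat_mk by (rule mk_eq_all) (simp add: all8 tb_def qbit_def tX0_def)
lemma CX01_tb: "CX01 = mk (tb tCX01)"
  unfolding CX01_def perm_mat_mk by (rule mk_eq_all) (simp add: all8 tb_def qbit_def tCX01_def)
lemma CCX12_tb: "CCX12 = mk (tb tCCX12)"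
  unfolding CCX12_def perm_mat_mk by (rule mk_eq_all) (simp add: all8 tb_def qbit_def tCCX12_def)
lemma K0123_tb: "K0123 = mk (tb tK0123)"
proof -
  have eq: "K0123 = mk (\<lambda>r c. if r < 4 \<and> c < 4 then hh r c else if r = c then 1 else 0)"
    by (simp add: K0123_def mk_def)
  show ?thesis unfolding eq by (rule mk_eq_all) (simp add: all8 tb_def qbit_def hh_def tK0123_def)
qed
lemma K12_tb: "K12 = mk (tb tK12)"
proof -
  have eq: "K12 = mk (\<lambda>r c. if qbit 0 r = qbit 0 c then hh r c else 0)"
    by (simp add: K12_def mk_def)
  show ?thesis unfolding eq by (rule mk_eq_all) (simp add: all8 tb_def qbit_def hh_def tK12_def)
qed
lemma CCZ_tb: "CCZ = mk (tb tCCZ)"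
proof -
  have eq: "CCZ = mk (\<lambda>r c. if r = c then (if r = 7 then -1 else 1) else 0)"
    by (simp add: CCZ_def mk_def)
  show ?thesis unfolding eq by (rule mk_eq_all) (simp add: all8 tb_def tCCZ_def)
qed
lemma X0_O8D: "X0 \<in> O8D"
  unfolding X0_tb by (rule tb_O8D) (simp_all add: all8 tb_def fmul_def sum8e tX0_def)
lemma CX01_O8D: "CX01 \<in> O8D"
  unfolding CX01_tb by (rule tb_O8D) (simp_all add: all8 tb_def fmul_def sum8e tCX01_def)
lemma CCX12_O8D: "CCX12 \<in> O8D"
  unfolding CCX12_tb by (rule tb_O8D) (simp_all add: all8 tb_def fmul_def sum8e tCCX12_def)
lemma K0123_O8D: "K0123 \<in> O8D"
  unfolding K0123_tb by (rule tb_O8D) (simp_all add: all8 tb_def fmul_def sum8e tK0123_def)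
lemma K12_O8D: "K12 \<in> O8D"
  unfolding K12_tb by (rule tb_O8D) (simp_all add: all8 tb_def fmul_def sum8e tK12_def)
lemma CCZ_O8D: "CCZ \<in> O8D"
  unfolding CCZ_tb by (rule tb_O8D) (simp_all add: all8 tb_def fmul_def sum8e tCCZ_def)

definition gX0 :: "nat list" where "gX0 = [4,5,6,7,0,1,2,3]"
definition gCX :: "nat list" where "gCX = [0,1,2,3,6,7,4,5]"
definition gCCX :: "nat list" where "gCCX = [0,1,2,7,4,5,6,3]"
definition gS23 :: "nat list" where "gS23 = [0,1,3,2,4,5,6,7]"
definition gS67 :: "nat list" where "gS67 = [0,1,2,3,4,5,7,6]"
definition gl0 :: "nat list list" where "gl0 = [gX0,gCX,gCCX]"
definition gl1 :: "nat list list" where "gl1 = [gX0,gCX,gCCX,gS23]"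
definition gl2 :: "nat list list" where "gl2 = [gX0,gCX,gCCX,gS67]"
lemma upt8: "[0..<8] = [0,1,2,3,4,5,6,7::nat]" by (simp add: upt_rec)
lemmas gdefs = upt8 gX0_def gCX_def gCCX_def gS23_def gS67_def gl0_def gl1_def gl2_def
lemma X0_pl: "X0 = perm_mat (pl gX0)"
  unfolding X0_def by (rule perm_mat_cong) (simp add: all8 pl_def gX0_def qbit_def)
lemma CX01_pl: "CX01 = perm_mat (pl gCX)"
  unfolding CX01_def by (rule perm_mat_cong) (simp add: all8 pl_def gCX_def qbit_def)
lemma CCX12_pl: "CCX12 = perm_mat (pl gCCX)"
  unfolding CCX12_def by (rule perm_mat_cong) (simp add: all8 pl_def gCCX_def qbit_def)
lemma all3: "(\<forall>i<3. P i) \<longleftrightarrow> P 0 \<and> P 1 \<and> P (2::nat)"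
  by (auto simp: numeral_eq_Suc less_Suc_eq)
lemma all4: "(\<forall>i<4. P i) \<longleftrightarrow> P 0 \<and> P 1 \<and> P 2 \<and> P (3::nat)"
  by (auto simp: numeral_eq_Suc less_Suc_eq)
lemma ptb: "perm_mat (pl P) = mk (\<lambda>r c. if r = P ! c then 1 else 0)"
  by (simp add: perm_mat_mk pl_def)
lemma gl0_G:
  assumes G: "closedG G" and "X0 \<in> G" "CX01 \<in> G" "CCX12 \<in> G" and w: "set w \<subseteq> {..<3}"
  shows "perm_mat (pl (wp gl0 w)) \<in> G"
proof -
  have L: "length gl0 = 3" "gl0!0 = gX0" "gl0!1 = gCX" "gl0!2 = gCCX" by (simp_all add: gl0_def)
  have ok: "okp gX0" "okp gCX" "okp gCCX" by (simp_all add: okp_def all8 gdefs)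
  have "\<forall>i<length gl0. okp (gl0!i) \<and> perm_mat (pl (gl0!i)) \<in> G"
    unfolding L(1) all3 L(2-4) using ok assms by (simp add: X0_pl[symmetric] CX01_pl[symmetric] CCX12_pl[symmetric])
  then show ?thesis by (rule wp_G[OF G]) (use w L(1) in simp)
qed

lemma S23_eq: "perm_mat (pl gS23) = K0123 ** perm_mat (pl (wp gl0 [2,0,1,2,1,2,0])) ** K0123"
proof -
  have w: "wp gl0 [2,0,1,2,1,2,0] = [0,3,2,1,4,5,6,7]" by (simp add: gdefs)
  have p: "perm_mat (pl [0,3,2,1,4,5,6,7]) = mk (tb [[1,0,0,0,0,0,0,0],[0,0,0,1,0,0,0,0],[0,0,1,0,0,0,0,0],[0,1,0,0,0,0,0,0],[0,0,0,0,1,0,0,0],[0,0,0,0,0,1,0,0],[0,0,0,0,0,0,1,0],[0,0,0,0,0,0,0,1]])" unfolding ptb by (rule mk_eq_all) (simp add: all8 tb_def)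
  have s1: "mk (tb tK0123) ** mk (tb [[1,0,0,0,0,0,0,0],[0,0,0,1,0,0,0,0],[0,0,1,0,0,0,0,0],[0,1,0,0,0,0,0,0],[0,0,0,0,1,0,0,0],[0,0,0,0,0,1,0,0],[0,0,0,0,0,0,1,0],[0,0,0,0,0,0,0,1]]) = mk (tb [[1/2,1/2,1/2,1/2,0,0,0,0],[1/2,- 1/2,1/2,- 1/2,0,0,0,0],[1/2,- 1/2,- 1/2,1/2,0,0,0,0],[1/2,1/2,- 1/2,- 1/2,0,0,0,0],[0,0,0,0,1,0,0,0],[0,0,0,0,0,1,0,0],[0,0,0,0,0,0,1,0],[0,0,0,0,0,0,0,1]])" unfolding mk_mult by (rule mk_eq_all) (simp add: all8 sum8e fmul_def tb_def tK0123_def)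
  have s2: "mk (tb [[1/2,1/2,1/2,1/2,0,0,0,0],[1/2,- 1/2,1/2,- 1/2,0,0,0,0],[1/2,- 1/2,- 1/2,1/2,0,0,0,0],[1/2,1/2,- 1/2,- 1/2,0,0,0,0],[0,0,0,0,1,0,0,0],[0,0,0,0,0,1,0,0],[0,0,0,0,0,0,1,0],[0,0,0,0,0,0,0,1]]) ** mk (tb tK0123) = perm_mat (pl gS23)" unfolding mk_mult ptb by (rule mk_eq_all) (simp add: all8 sum8e fmul_def tb_def tK0123_def gS23_def)
  show ?thesis unfolding w p K0123_tb s1 s2 ..
qed
lemma S67_eq: "perm_mat (pl gS67) = K12 ** perm_mat (pl (wp gl0 [2,1,2,1,2])) ** K12"
proof -
  have w: "wp gl0 [2,1,2,1,2] = [0,1,2,3,4,7,6,5]" by (simp add: gdefs)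
  have p: "perm_mat (pl [0,1,2,3,4,7,6,5]) = mk (tb [[1,0,0,0,0,0,0,0],[0,1,0,0,0,0,0,0],[0,0,1,0,0,0,0,0],[0,0,0,1,0,0,0,0],[0,0,0,0,1,0,0,0],[0,0,0,0,0,0,0,1],[0,0,0,0,0,0,1,0],[0,0,0,0,0,1,0,0]])" unfolding ptb by (rule mk_eq_all) (simp add: all8 tb_def)
  have s1: "mk (tb tK12) ** mk (tb [[1,0,0,0,0,0,0,0],[0,1,0,0,0,0,0,0],[0,0,1,0,0,0,0,0],[0,0,0,1,0,0,0,0],[0,0,0,0,1,0,0,0],[0,0,0,0,0,0,0,1],[0,0,0,0,0,0,1,0],[0,0,0,0,0,1,0,0]]) = mk (tb [[1/2,1/2,1/2,1/2,0,0,0,0],[1/2,- 1/2,1/2,- 1/2,0,0,0,0],[1/2,1/2,- 1/2,- 1/2,0,0,0,0],[1/2,- 1/2,- 1/2,1/2,0,0,0,0],[0,0,0,0,1/2,1/2,1/2,1/2],[0,0,0,0,1/2,- 1/2,1/2,- 1/2],[0,0,0,0,1/2,- 1/2,- 1/2,1/2],[0,0,0,0,1/2,1/2,- 1/2,- 1/2]])" unfolding mk_mult by (rule mk_eq_all) (simp add: all8 sum8e fmul_def tb_def tK12_def)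
  have s2: "mk (tb [[1/2,1/2,1/2,1/2,0,0,0,0],[1/2,- 1/2,1/2,- 1/2,0,0,0,0],[1/2,1/2,- 1/2,- 1/2,0,0,0,0],[1/2,- 1/2,- 1/2,1/2,0,0,0,0],[0,0,0,0,1/2,1/2,1/2,1/2],[0,0,0,0,1/2,- 1/2,1/2,- 1/2],[0,0,0,0,1/2,- 1/2,- 1/2,1/2],[0,0,0,0,1/2,1/2,- 1/2,- 1/2]]) ** mk (tb tK12) = perm_mat (pl gS67)" unfolding mk_mult ptb by (rule mk_eq_all) (simp add: all8 sum8e fmul_def tb_def tK12_def gS67_def)
  show ?thesis unfolding w p K12_tb s1 s2 ..
qed
lemma gl1_G:
  assumes G: "closedG G" and g: "X0 \<in> G" "CX01 \<in> G" "CCX12 \<in> G" "K0123 \<in> G" and w: "set w \<subseteq> {..<4}"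
  shows "perm_mat (pl (wp gl1 w)) \<in> G"
proof -
  have "perm_mat (pl (wp gl0 [2,0,1,2,1,2,0])) \<in> G" by (rule gl0_G[OF G g(1-3)]) simp
  then have s: "perm_mat (pl gS23) \<in> G" unfolding S23_eq using G g(4) by (intro closedG_mult)
  have L: "length gl1 = 4" "gl1!0 = gX0" "gl1!1 = gCX" "gl1!2 = gCCX" "gl1!3 = gS23" by (simp_all add: gl1_def)
  have ok: "okp gX0" "okp gCX" "okp gCCX" "okp gS23" by (simp_all add: okp_def all8 gdefs)
  have "\<forall>i<length gl1. okp (gl1!i) \<and> perm_mat (pl (gl1!i)) \<in> G"
    unfolding L(1) all4 L(2-5) using ok g s by (simp add: X0_pl[symmetric] CX01_pl[symmetric] CCX12_pl[symmetric])
  then show ?thesis by (rule wp_G[OF G]) (use w L(1) in simp)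
qed
lemma gl2_G:
  assumes G: "closedG G" and g: "X0 \<in> G" "CX01 \<in> G" "CCX12 \<in> G" "K12 \<in> G" and w: "set w \<subseteq> {..<4}"
  shows "perm_mat (pl (wp gl2 w)) \<in> G"
proof -
  have "perm_mat (pl (wp gl0 [2,1,2,1,2])) \<in> G" by (rule gl0_G[OF G g(1-3)]) simp
  then have s: "perm_mat (pl gS67) \<in> G" unfolding S67_eq using G g(4) by (intro closedG_mult)
  have L: "length gl2 = 4" "gl2!0 = gX0" "gl2!1 = gCX" "gl2!2 = gCCX" "gl2!3 = gS67" by (simp_all add: gl2_def)
  have ok: "okp gX0" "okp gCX" "okp gCCX" "okp gS67" by (simp_all add: okp_def all8 gdefs)
  have "\<forall>i<length gl2. okp (gl2!i) \<and> perm_mat (pl (gl2!i)) \<in> G"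
    unfolding L(1) all4 L(2-5) using ok g s by (simp add: X0_pl[symmetric] CX01_pl[symmetric] CCX12_pl[symmetric])
  then show ?thesis by (rule wp_G[OF G]) (use w L(1) in simp)
qed

lemma Sw0_1:
  assumes G: "closedG G" and "\<forall>w. set w \<subseteq> {..<4} \<longrightarrow> perm_mat (pl (wp gl1 w)) \<in> G"
  shows "\<forall>n. 0 < n \<and> n < 8 \<longrightarrow> Sw 0 n \<in> G"
proof -
  have "Sw 0 1 = perm_mat (pl (wp gl1 [0,1,0,3,0,1,0]))" unfolding Sw_def by (rule perm_mat_cong) (simp add: all8 swf_def pl_def gdefs)
  moreover have "perm_mat (pl (wp gl1 [0,1,0,3,0,1,0])) \<in> G" by (rule assms(2)[rule_format]) auto
  ultimately have s1: "Sw 0 1 \<in> G" by simp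
  have "Sw 0 2 = perm_mat (pl (wp gl1 [2,0,1,2,1,2,1,0]))" unfolding Sw_def by (rule perm_mat_cong) (simp add: all8 swf_def pl_def gdefs)
  moreover have "perm_mat (pl (wp gl1 [2,0,1,2,1,2,1,0])) \<in> G" by (rule assms(2)[rule_format]) auto
  ultimately have s2: "Sw 0 2 \<in> G" by simp
  have "Sw 0 3 = perm_mat (pl (wp gl1 [3,2,0,1,2,1,2,1,0,3]))" unfolding Sw_def by (rule perm_mat_cong) (simp add: all8 swf_def pl_def gdefs)
  moreover have "perm_mat (pl (wp gl1 [3,2,0,1,2,1,2,1,0,3])) \<in> G" by (rule assms(2)[rule_format]) auto
  ultimately have s3: "Sw 0 3 \<in> G" by simp
  have "Sw 0 4 = perm_mat (pl (wp gl1 [1,0,3,1,2,0,3,2,0,3,1,0,1]))" unfolding Sw_def by (rule perm_mat_cong) (simp add: all8 swf_def pl_def gdefs)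
  moreover have "perm_mat (pl (wp gl1 [1,0,3,1,2,0,3,2,0,3,1,0,1])) \<in> G" by (rule assms(2)[rule_format]) auto
  ultimately have s4: "Sw 0 4 \<in> G" by simp
  have "Sw 0 5 = perm_mat (pl (wp gl1 [1,0,1,2,0,3,2,1,0,1,0]))" unfolding Sw_def by (rule perm_mat_cong) (simp add: all8 swf_def pl_def gdefs)
  moreover have "perm_mat (pl (wp gl1 [1,0,1,2,0,3,2,1,0,1,0])) \<in> G" by (rule assms(2)[rule_format]) auto
  ultimately have s5: "Sw 0 5 \<in> G" by simp
  have "Sw 0 6 = perm_mat (pl (wp gl1 [0,3,1,2,0,3,2,0,3,1,0]))" unfolding Sw_def by (rule perm_mat_cong) (simp add: all8 swf_def pl_def gdefs)
  moreover have "perm_mat (pl (wp gl1 [0,3,1,2,0,3,2,0,3,1,0])) \<in> G" by (rule assms(2)[rule_format]) auto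
  ultimately have s6: "Sw 0 6 \<in> G" by simp
  have "Sw 0 7 = perm_mat (pl (wp gl1 [0,1,2,0,3,2,0,1,0]))" unfolding Sw_def by (rule perm_mat_cong) (simp add: all8 swf_def pl_def gdefs)
  moreover have "perm_mat (pl (wp gl1 [0,1,2,0,3,2,0,1,0])) \<in> G" by (rule assms(2)[rule_format]) auto
  ultimately have s7: "Sw 0 7 \<in> G" by simp
  show ?thesis using s1 s2 s3 s4 s5 s6 s7 by (auto simp: numeral_eq_Suc less_Suc_eq)
qed
lemma Sw0_2:
  assumes G: "closedG G" and "\<forall>w. set w \<subseteq> {..<4} \<longrightarrow> perm_mat (pl (wp gl2 w)) \<in> G"
  shows "\<forall>n. 0 < n \<and> n < 8 \<longrightarrow> Sw 0 n \<in> G"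
proof -
  have "Sw 0 1 = perm_mat (pl (wp gl2 [0,1,3,1,0]))" unfolding Sw_def by (rule perm_mat_cong) (simp add: all8 swf_def pl_def gdefs)
  moreover have "perm_mat (pl (wp gl2 [0,1,3,1,0])) \<in> G" by (rule assms(2)[rule_format]) auto
  ultimately have s1: "Sw 0 1 \<in> G" by simp
  have "Sw 0 2 = perm_mat (pl (wp gl2 [2,0,1,2,1,2,1,0]))" unfolding Sw_def by (rule perm_mat_cong) (simp add: all8 swf_def pl_def gdefs)
  moreover have "perm_mat (pl (wp gl2 [2,0,1,2,1,2,1,0])) \<in> G" by (rule assms(2)[rule_format]) auto
  ultimately have s2: "Sw 0 2 \<in> G" by simp
  have "Sw 0 3 = perm_mat (pl (wp gl2 [2,0,1,2,3,2,1,2,0]))" unfolding Sw_def by (rule perm_mat_cong) (simp add: all8 swf_def pl_def gdefs)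
  moreover have "perm_mat (pl (wp gl2 [2,0,1,2,3,2,1,2,0])) \<in> G" by (rule assms(2)[rule_format]) auto
  ultimately have s3: "Sw 0 3 \<in> G" by simp
  have "Sw 0 4 = perm_mat (pl (wp gl2 [1,3,0,1,2,3,2,1,0,3,1]))" unfolding Sw_def by (rule perm_mat_cong) (simp add: all8 swf_def pl_def gdefs)
  moreover have "perm_mat (pl (wp gl2 [1,3,0,1,2,3,2,1,0,3,1])) \<in> G" by (rule assms(2)[rule_format]) auto
  ultimately have s4: "Sw 0 4 \<in> G" by simp
  have "Sw 0 5 = perm_mat (pl (wp gl2 [1,0,1,2,3,2,1,0,1]))" unfolding Sw_def by (rule perm_mat_cong) (simp add: all8 swf_def pl_def gdefs)
  moreover have "perm_mat (pl (wp gl2 [1,0,1,2,3,2,1,0,1])) \<in> G" by (rule assms(2)[rule_format]) auto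
  ultimately have s5: "Sw 0 5 \<in> G" by simp
  have "Sw 0 6 = perm_mat (pl (wp gl2 [3,0,1,2,3,2,1,0,3]))" unfolding Sw_def by (rule perm_mat_cong) (simp add: all8 swf_def pl_def gdefs)
  moreover have "perm_mat (pl (wp gl2 [3,0,1,2,3,2,1,0,3])) \<in> G" by (rule assms(2)[rule_format]) auto
  ultimately have s6: "Sw 0 6 \<in> G" by simp
  have "Sw 0 7 = perm_mat (pl (wp gl2 [0,1,2,3,2,1,0]))" unfolding Sw_def by (rule perm_mat_cong) (simp add: all8 swf_def pl_def gdefs)
  moreover have "perm_mat (pl (wp gl2 [0,1,2,3,2,1,0])) \<in> G" by (rule assms(2)[rule_format]) auto
  ultimately have s7: "Sw 0 7 \<in> G" by simp
  show ?thesis using s1 s2 s3 s4 s5 s6 s7 by (auto simp: numeral_eq_Suc less_Suc_eq)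
qed

definition Dg :: "nat \<Rightarrow> real^8^8" where
  "Dg a = mk (\<lambda>r c. if r = c then (if r = a then -1 else 1) else 0)"

lemma swf_lt: "a < 8 \<Longrightarrow> b < 8 \<Longrightarrow> x < 8 \<Longrightarrow> swf a b x < 8"
  by (simp add: swf_def)

lemma Sw_mk_left:
  assumes "a < 8" "b < 8"
  shows "Sw a b ** mk f = mk (\<lambda>r c. f (swf a b r) c)"
proof -
  have "fmul (\<lambda>r c. if r = swf a b c then 1 else 0) f r c = f (swf a b r) c" if "r < 8" for r c
  proof -
    have "fmul (\<lambda>r c. if r = swf a b c then 1 else 0) f r c = (\<Sum>k<8. if k = swf a b r then f k c else 0)"
      unfolding fmul_def by (intro sum.cong) (auto simp: swf_def)
    also have "\<dots> = f (swf a b r) c" using swf_lt[OF assms that] by simp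
    finally show ?thesis .
  qed
  then show ?thesis unfolding Sw_def perm_mat_mk mk_mult by (intro mk_eqI) auto
qed

lemma Sw_mk_right:
  assumes "a < 8" "b < 8"
  shows "mk f ** Sw a b = mk (\<lambda>r c. f r (swf a b c))"
proof -
  have "fmul f (\<lambda>r c. if r = swf a b c then 1 else 0) r c = f r (swf a b c)" if "c < 8" for r c
  proof -
    have "fmul f (\<lambda>r c. if r = swf a b c then 1 else 0) r c = (\<Sum>k<8. if k = swf a b c then f r k else 0)"
      unfolding fmul_def by (intro sum.cong) auto
    also have "\<dots> = f r (swf a b c)" using swf_lt[OF assms that] by simp
    finally show ?thesis .
  qed
  then show ?thesis unfolding Sw_def perm_mat_mk mk_mult by (intro mk_eqI) auto
qed

lemma Dg_conj:
  assumes "a < 8" "b < 8"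
  shows "Sw a b ** Dg a ** Sw a b = Dg b"
  unfolding Dg_def Sw_mk_left[OF assms] Sw_mk_right[OF assms]
  by (intro mk_eqI) (auto simp: swf_def)

lemma Dg_all:
  assumes G: "closedG G" and sw: "\<forall>a<8. \<forall>b<8. Sw a b \<in> G" and q: "Dg q \<in> G" "q < 8"
  shows "\<forall>a<8. Dg a \<in> G"
proof (intro allI impI)
  fix a :: nat assume a: "a < 8"
  have "Sw q a ** Dg q ** Sw q a \<in> G" using sw q a G by (intro closedG_mult) auto
  then show "Dg a \<in> G" using Dg_conj[OF q(2) a] by simp
qed

lemma Sw_all:
  assumes G: "closedG G" and h: "\<forall>n. 0 < n \<and> n < 8 \<longrightarrow> Sw 0 n \<in> G"
  shows "\<forall>a<8. \<forall>b<8. Sw a b \<in> G"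
  using Sw_G[OF G h] by blast

lemma D2_eq: "Dg 2 = K0123 ** perm_mat (pl [0,3,4,5,1,2,6,7]) ** K0123 ** perm_mat (pl [5,4,1,3,0,2,6,7]) ** K0123 ** perm_mat (pl [4,1,5,3,0,2,6,7]) ** K0123 ** perm_mat (pl [0,1,4,5,2,3,6,7]) ** K0123 ** Sw 2 3"
proof -
  have f1: "perm_mat (pl [0,3,4,5,1,2,6,7]) = mk (tb [[1,0,0,0,0,0,0,0],[0,0,0,0,1,0,0,0],[0,0,0,0,0,1,0,0],[0,1,0,0,0,0,0,0],[0,0,1,0,0,0,0,0],[0,0,0,1,0,0,0,0],[0,0,0,0,0,0,1,0],[0,0,0,0,0,0,0,1]])" unfolding ptb by (rule mk_eq_all) (simp add: all8 tb_def)
  have f2: "perm_mat (pl [5,4,1,3,0,2,6,7]) = mk (tb [[0,0,0,0,1,0,0,0],[0,0,1,0,0,0,0,0],[0,0,0,0,0,1,0,0],[0,0,0,1,0,0,0,0],[0,1,0,0,0,0,0,0],[1,0,0,0,0,0,0,0],[0,0,0,0,0,0,1,0],[0,0,0,0,0,0,0,1]])" unfolding ptb by (rule mk_eq_all) (simp add: all8 tb_def)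
  have f3: "perm_mat (pl [4,1,5,3,0,2,6,7]) = mk (tb [[0,0,0,0,1,0,0,0],[0,1,0,0,0,0,0,0],[0,0,0,0,0,1,0,0],[0,0,0,1,0,0,0,0],[1,0,0,0,0,0,0,0],[0,0,1,0,0,0,0,0],[0,0,0,0,0,0,1,0],[0,0,0,0,0,0,0,1]])" unfolding ptb by (rule mk_eq_all) (simp add: all8 tb_def)
  have f4: "perm_mat (pl [0,1,4,5,2,3,6,7]) = mk (tb [[1,0,0,0,0,0,0,0],[0,1,0,0,0,0,0,0],[0,0,0,0,1,0,0,0],[0,0,0,0,0,1,0,0],[0,0,1,0,0,0,0,0],[0,0,0,1,0,0,0,0],[0,0,0,0,0,0,1,0],[0,0,0,0,0,0,0,1]])" unfolding ptb by (rule mk_eq_all) (simp add: all8 tb_def)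
  have fs: "Sw 2 3 = mk (tb [[1,0,0,0,0,0,0,0],[0,1,0,0,0,0,0,0],[0,0,0,1,0,0,0,0],[0,0,1,0,0,0,0,0],[0,0,0,0,1,0,0,0],[0,0,0,0,0,1,0,0],[0,0,0,0,0,0,1,0],[0,0,0,0,0,0,0,1]])" unfolding Sw_def perm_mat_mk by (rule mk_eq_all) (simp add: all8 tb_def swf_def)
  have s1: "mk (tb tK0123) ** mk (tb [[1,0,0,0,0,0,0,0],[0,0,0,0,1,0,0,0],[0,0,0,0,0,1,0,0],[0,1,0,0,0,0,0,0],[0,0,1,0,0,0,0,0],[0,0,0,1,0,0,0,0],[0,0,0,0,0,0,1,0],[0,0,0,0,0,0,0,1]]) = mk (tb [[1/2,1/2,0,0,1/2,1/2,0,0],[1/2,- 1/2,0,0,- 1/2,1/2,0,0],[1/2,- 1/2,0,0,1/2,- 1/2,0,0],[1/2,1/2,0,0,- 1/2,- 1/2,0,0],[0,0,1,0,0,0,0,0],[0,0,0,1,0,0,0,0],[0,0,0,0,0,0,1,0],[0,0,0,0,0,0,0,1]])" unfolding mk_mult by (rule mk_eq_all) (simp add: all8 sum8e fmul_def tb_def tK0123_def)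
  have s2: "mk (tb [[1/2,1/2,0,0,1/2,1/2,0,0],[1/2,- 1/2,0,0,- 1/2,1/2,0,0],[1/2,- 1/2,0,0,1/2,- 1/2,0,0],[1/2,1/2,0,0,- 1/2,- 1/2,0,0],[0,0,1,0,0,0,0,0],[0,0,0,1,0,0,0,0],[0,0,0,0,0,0,1,0],[0,0,0,0,0,0,0,1]]) ** mk (tb tK0123) = mk (tb [[1/2,0,1/2,0,1/2,1/2,0,0],[0,1/2,0,1/2,- 1/2,1/2,0,0],[0,1/2,0,1/2,1/2,- 1/2,0,0],[1/2,0,1/2,0,- 1/2,- 1/2,0,0],[1/2,1/2,- 1/2,- 1/2,0,0,0,0],[1/2,- 1/2,- 1/2,1/2,0,0,0,0],[0,0,0,0,0,0,1,0],[0,0,0,0,0,0,0,1]])" unfolding mk_mult by (rule mk_eq_all) (simp add: all8 sum8e fmul_def tb_def tK0123_def)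
  have s3: "mk (tb [[1/2,0,1/2,0,1/2,1/2,0,0],[0,1/2,0,1/2,- 1/2,1/2,0,0],[0,1/2,0,1/2,1/2,- 1/2,0,0],[1/2,0,1/2,0,- 1/2,- 1/2,0,0],[1/2,1/2,- 1/2,- 1/2,0,0,0,0],[1/2,- 1/2,- 1/2,1/2,0,0,0,0],[0,0,0,0,0,0,1,0],[0,0,0,0,0,0,0,1]]) ** mk (tb [[0,0,0,0,1,0,0,0],[0,0,1,0,0,0,0,0],[0,0,0,0,0,1,0,0],[0,0,0,1,0,0,0,0],[0,1,0,0,0,0,0,0],[1,0,0,0,0,0,0,0],[0,0,0,0,0,0,1,0],[0,0,0,0,0,0,0,1]]) = mk (tb [[1/2,1/2,0,0,1/2,1/2,0,0],[1/2,- 1/2,1/2,1/2,0,0,0,0],[- 1/2,1/2,1/2,1/2,0,0,0,0],[- 1/2,- 1/2,0,0,1/2,1/2,0,0],[0,0,1/2,- 1/2,1/2,- 1/2,0,0],[0,0,- 1/2,1/2,1/2,- 1/2,0,0],[0,0,0,0,0,0,1,0],[0,0,0,0,0,0,0,1]])" unfolding mk_mult by (rule mk_eq_all) (simp add: all8 sum8e fmul_def tb_def tK0123_def)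
  have s4: "mk (tb [[1/2,1/2,0,0,1/2,1/2,0,0],[1/2,- 1/2,1/2,1/2,0,0,0,0],[- 1/2,1/2,1/2,1/2,0,0,0,0],[- 1/2,- 1/2,0,0,1/2,1/2,0,0],[0,0,1/2,- 1/2,1/2,- 1/2,0,0],[0,0,- 1/2,1/2,1/2,- 1/2,0,0],[0,0,0,0,0,0,1,0],[0,0,0,0,0,0,0,1]]) ** mk (tb tK0123) = mk (tb [[1/2,0,1/2,0,1/2,1/2,0,0],[1/2,1/2,- 1/2,1/2,0,0,0,0],[1/2,- 1/2,- 1/2,- 1/2,0,0,0,0],[- 1/2,0,- 1/2,0,1/2,1/2,0,0],[0,1/2,0,- 1/2,1/2,- 1/2,0,0],[0,- 1/2,0,1/2,1/2,- 1/2,0,0],[0,0,0,0,0,0,1,0],[0,0,0,0,0,0,0,1]])" unfolding mk_mult by (rule mk_eq_all) (simp add: all8 sum8e fmul_def tb_def tK0123_def)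
  have s5: "mk (tb [[1/2,0,1/2,0,1/2,1/2,0,0],[1/2,1/2,- 1/2,1/2,0,0,0,0],[1/2,- 1/2,- 1/2,- 1/2,0,0,0,0],[- 1/2,0,- 1/2,0,1/2,1/2,0,0],[0,1/2,0,- 1/2,1/2,- 1/2,0,0],[0,- 1/2,0,1/2,1/2,- 1/2,0,0],[0,0,0,0,0,0,1,0],[0,0,0,0,0,0,0,1]]) ** mk (tb [[0,0,0,0,1,0,0,0],[0,1,0,0,0,0,0,0],[0,0,0,0,0,1,0,0],[0,0,0,1,0,0,0,0],[1,0,0,0,0,0,0,0],[0,0,1,0,0,0,0,0],[0,0,0,0,0,0,1,0],[0,0,0,0,0,0,0,1]]) = mk (tb [[1/2,0,1/2,0,1/2,1/2,0,0],[0,1/2,0,1/2,1/2,- 1/2,0,0],[0,- 1/2,0,- 1/2,1/2,- 1/2,0,0],[1/2,0,1/2,0,- 1/2,- 1/2,0,0],[1/2,1/2,- 1/2,- 1/2,0,0,0,0],[1/2,- 1/2,- 1/2,1/2,0,0,0,0],[0,0,0,0,0,0,1,0],[0,0,0,0,0,0,0,1]])" unfolding mk_mult by (rule mk_eq_all) (simp add: all8 sum8e fmul_def tb_def tK0123_def)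
  have s6: "mk (tb [[1/2,0,1/2,0,1/2,1/2,0,0],[0,1/2,0,1/2,1/2,- 1/2,0,0],[0,- 1/2,0,- 1/2,1/2,- 1/2,0,0],[1/2,0,1/2,0,- 1/2,- 1/2,0,0],[1/2,1/2,- 1/2,- 1/2,0,0,0,0],[1/2,- 1/2,- 1/2,1/2,0,0,0,0],[0,0,0,0,0,0,1,0],[0,0,0,0,0,0,0,1]]) ** mk (tb tK0123) = mk (tb [[1/2,1/2,0,0,1/2,1/2,0,0],[1/2,- 1/2,0,0,1/2,- 1/2,0,0],[- 1/2,1/2,0,0,1/2,- 1/2,0,0],[1/2,1/2,0,0,- 1/2,- 1/2,0,0],[0,0,1,0,0,0,0,0],[0,0,0,1,0,0,0,0],[0,0,0,0,0,0,1,0],[0,0,0,0,0,0,0,1]])" unfolding mk_mult by (rule mk_eq_all) (simp add: all8 sum8e fmul_def tb_def tK0123_def)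
  have s7: "mk (tb [[1/2,1/2,0,0,1/2,1/2,0,0],[1/2,- 1/2,0,0,1/2,- 1/2,0,0],[- 1/2,1/2,0,0,1/2,- 1/2,0,0],[1/2,1/2,0,0,- 1/2,- 1/2,0,0],[0,0,1,0,0,0,0,0],[0,0,0,1,0,0,0,0],[0,0,0,0,0,0,1,0],[0,0,0,0,0,0,0,1]]) ** mk (tb [[1,0,0,0,0,0,0,0],[0,1,0,0,0,0,0,0],[0,0,0,0,1,0,0,0],[0,0,0,0,0,1,0,0],[0,0,1,0,0,0,0,0],[0,0,0,1,0,0,0,0],[0,0,0,0,0,0,1,0],[0,0,0,0,0,0,0,1]]) = mk (tb [[1/2,1/2,1/2,1/2,0,0,0,0],[1/2,- 1/2,1/2,- 1/2,0,0,0,0],[- 1/2,1/2,1/2,- 1/2,0,0,0,0],[1/2,1/2,- 1/2,- 1/2,0,0,0,0],[0,0,0,0,1,0,0,0],[0,0,0,0,0,1,0,0],[0,0,0,0,0,0,1,0],[0,0,0,0,0,0,0,1]])" unfolding mk_mult by (rule mk_eq_all) (simp add: all8 sum8e fmul_def tb_def tK0123_def)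
  have s8: "mk (tb [[1/2,1/2,1/2,1/2,0,0,0,0],[1/2,- 1/2,1/2,- 1/2,0,0,0,0],[- 1/2,1/2,1/2,- 1/2,0,0,0,0],[1/2,1/2,- 1/2,- 1/2,0,0,0,0],[0,0,0,0,1,0,0,0],[0,0,0,0,0,1,0,0],[0,0,0,0,0,0,1,0],[0,0,0,0,0,0,0,1]]) ** mk (tb tK0123) = mk (tb [[1,0,0,0,0,0,0,0],[0,1,0,0,0,0,0,0],[0,0,0,- 1,0,0,0,0],[0,0,1,0,0,0,0,0],[0,0,0,0,1,0,0,0],[0,0,0,0,0,1,0,0],[0,0,0,0,0,0,1,0],[0,0,0,0,0,0,0,1]])" unfolding mk_mult by (rule mk_eq_all) (simp add: all8 sum8e fmul_def tb_def tK0123_def)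
  have s9: "mk (tb [[1,0,0,0,0,0,0,0],[0,1,0,0,0,0,0,0],[0,0,0,- 1,0,0,0,0],[0,0,1,0,0,0,0,0],[0,0,0,0,1,0,0,0],[0,0,0,0,0,1,0,0],[0,0,0,0,0,0,1,0],[0,0,0,0,0,0,0,1]]) ** mk (tb [[1,0,0,0,0,0,0,0],[0,1,0,0,0,0,0,0],[0,0,0,1,0,0,0,0],[0,0,1,0,0,0,0,0],[0,0,0,0,1,0,0,0],[0,0,0,0,0,1,0,0],[0,0,0,0,0,0,1,0],[0,0,0,0,0,0,0,1]]) = mk (tb [[1,0,0,0,0,0,0,0],[0,1,0,0,0,0,0,0],[0,0,- 1,0,0,0,0,0],[0,0,0,1,0,0,0,0],[0,0,0,0,1,0,0,0],[0,0,0,0,0,1,0,0],[0,0,0,0,0,0,1,0],[0,0,0,0,0,0,0,1]])" unfolding mk_mult by (rule mk_eq_all) (simp add: all8 sum8e fmul_def tb_def tK0123_def)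
  have e: "Dg 2 = mk (tb [[1,0,0,0,0,0,0,0],[0,1,0,0,0,0,0,0],[0,0,- 1,0,0,0,0,0],[0,0,0,1,0,0,0,0],[0,0,0,0,1,0,0,0],[0,0,0,0,0,1,0,0],[0,0,0,0,0,0,1,0],[0,0,0,0,0,0,0,1]])" unfolding Dg_def by (rule mk_eq_all) (simp add: all8 tb_def)
  show ?thesis by (simp only: K0123_tb f1 f2 f3 f4 fs s1 s2 s3 s4 s5 s6 s7 s8 s9 e)
qed
lemma K0123_eq: "K0123 = Dg 1 ** K12 ** Dg 1 ** K12 ** Sw 0 3 ** Dg 2"
proof -
  have d1: "Dg 1 = mk (tb [[1,0,0,0,0,0,0,0],[0,- 1,0,0,0,0,0,0],[0,0,1,0,0,0,0,0],[0,0,0,1,0,0,0,0],[0,0,0,0,1,0,0,0],[0,0,0,0,0,1,0,0],[0,0,0,0,0,0,1,0],[0,0,0,0,0,0,0,1]])" unfolding Dg_def by (rule mk_eq_all) (simp add: all8 tb_def)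
  have d2: "Dg 2 = mk (tb [[1,0,0,0,0,0,0,0],[0,1,0,0,0,0,0,0],[0,0,- 1,0,0,0,0,0],[0,0,0,1,0,0,0,0],[0,0,0,0,1,0,0,0],[0,0,0,0,0,1,0,0],[0,0,0,0,0,0,1,0],[0,0,0,0,0,0,0,1]])" unfolding Dg_def by (rule mk_eq_all) (simp add: all8 tb_def)
  have fs: "Sw 0 3 = mk (tb [[0,0,0,1,0,0,0,0],[0,1,0,0,0,0,0,0],[0,0,1,0,0,0,0,0],[1,0,0,0,0,0,0,0],[0,0,0,0,1,0,0,0],[0,0,0,0,0,1,0,0],[0,0,0,0,0,0,1,0],[0,0,0,0,0,0,0,1]])" unfolding Sw_def perm_mat_mk by (rule mk_eq_all) (simp add: all8 tb_def swf_def)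
  have s1: "mk (tb [[1,0,0,0,0,0,0,0],[0,- 1,0,0,0,0,0,0],[0,0,1,0,0,0,0,0],[0,0,0,1,0,0,0,0],[0,0,0,0,1,0,0,0],[0,0,0,0,0,1,0,0],[0,0,0,0,0,0,1,0],[0,0,0,0,0,0,0,1]]) ** mk (tb tK12) = mk (tb [[1/2,1/2,1/2,1/2,0,0,0,0],[- 1/2,1/2,- 1/2,1/2,0,0,0,0],[1/2,1/2,- 1/2,- 1/2,0,0,0,0],[1/2,- 1/2,- 1/2,1/2,0,0,0,0],[0,0,0,0,1/2,1/2,1/2,1/2],[0,0,0,0,1/2,- 1/2,1/2,- 1/2],[0,0,0,0,1/2,1/2,- 1/2,- 1/2],[0,0,0,0,1/2,- 1/2,- 1/2,1/2]])" unfolding mk_mult by (rule mk_eq_all) (simp add: all8 sum8e fmul_def tb_def tK12_def)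
  have s2: "mk (tb [[1/2,1/2,1/2,1/2,0,0,0,0],[- 1/2,1/2,- 1/2,1/2,0,0,0,0],[1/2,1/2,- 1/2,- 1/2,0,0,0,0],[1/2,- 1/2,- 1/2,1/2,0,0,0,0],[0,0,0,0,1/2,1/2,1/2,1/2],[0,0,0,0,1/2,- 1/2,1/2,- 1/2],[0,0,0,0,1/2,1/2,- 1/2,- 1/2],[0,0,0,0,1/2,- 1/2,- 1/2,1/2]]) ** mk (tb [[1,0,0,0,0,0,0,0],[0,- 1,0,0,0,0,0,0],[0,0,1,0,0,0,0,0],[0,0,0,1,0,0,0,0],[0,0,0,0,1,0,0,0],[0,0,0,0,0,1,0,0],[0,0,0,0,0,0,1,0],[0,0,0,0,0,0,0,1]]) = mk (tb [[1/2,- 1/2,1/2,1/2,0,0,0,0],[- 1/2,- 1/2,- 1/2,1/2,0,0,0,0],[1/2,- 1/2,- 1/2,- 1/2,0,0,0,0],[1/2,1/2,- 1/2,1/2,0,0,0,0],[0,0,0,0,1/2,1/2,1/2,1/2],[0,0,0,0,1/2,- 1/2,1/2,- 1/2],[0,0,0,0,1/2,1/2,- 1/2,- 1/2],[0,0,0,0,1/2,- 1/2,- 1/2,1/2]])" unfolding mk_mult by (rule mk_eq_all) (simp add: all8 sum8e fmul_def tb_def tK12_def)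
  have s3: "mk (tb [[1/2,- 1/2,1/2,1/2,0,0,0,0],[- 1/2,- 1/2,- 1/2,1/2,0,0,0,0],[1/2,- 1/2,- 1/2,- 1/2,0,0,0,0],[1/2,1/2,- 1/2,1/2,0,0,0,0],[0,0,0,0,1/2,1/2,1/2,1/2],[0,0,0,0,1/2,- 1/2,1/2,- 1/2],[0,0,0,0,1/2,1/2,- 1/2,- 1/2],[0,0,0,0,1/2,- 1/2,- 1/2,1/2]]) ** mk (tb tK12) = mk (tb [[1/2,1/2,- 1/2,1/2,0,0,0,0],[- 1/2,- 1/2,- 1/2,1/2,0,0,0,0],[- 1/2,1/2,1/2,1/2,0,0,0,0],[1/2,- 1/2,1/2,1/2,0,0,0,0],[0,0,0,0,1,0,0,0],[0,0,0,0,0,1,0,0],[0,0,0,0,0,0,1,0],[0,0,0,0,0,0,0,1]])" unfolding mk_mult by (rule mk_eq_all) (simp add: all8 sum8e fmul_def tb_def tK12_def)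
  have s4: "mk (tb [[1/2,1/2,- 1/2,1/2,0,0,0,0],[- 1/2,- 1/2,- 1/2,1/2,0,0,0,0],[- 1/2,1/2,1/2,1/2,0,0,0,0],[1/2,- 1/2,1/2,1/2,0,0,0,0],[0,0,0,0,1,0,0,0],[0,0,0,0,0,1,0,0],[0,0,0,0,0,0,1,0],[0,0,0,0,0,0,0,1]]) ** mk (tb [[0,0,0,1,0,0,0,0],[0,1,0,0,0,0,0,0],[0,0,1,0,0,0,0,0],[1,0,0,0,0,0,0,0],[0,0,0,0,1,0,0,0],[0,0,0,0,0,1,0,0],[0,0,0,0,0,0,1,0],[0,0,0,0,0,0,0,1]]) = mk (tb [[1/2,1/2,- 1/2,1/2,0,0,0,0],[1/2,- 1/2,- 1/2,- 1/2,0,0,0,0],[1/2,1/2,1/2,- 1/2,0,0,0,0],[1/2,- 1/2,1/2,1/2,0,0,0,0],[0,0,0,0,1,0,0,0],[0,0,0,0,0,1,0,0],[0,0,0,0,0,0,1,0],[0,0,0,0,0,0,0,1]])" unfolding mk_mult by (rule mk_eq_all) (simp add: all8 sum8e fmul_def tb_def tK12_def)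
  have s5: "mk (tb [[1/2,1/2,- 1/2,1/2,0,0,0,0],[1/2,- 1/2,- 1/2,- 1/2,0,0,0,0],[1/2,1/2,1/2,- 1/2,0,0,0,0],[1/2,- 1/2,1/2,1/2,0,0,0,0],[0,0,0,0,1,0,0,0],[0,0,0,0,0,1,0,0],[0,0,0,0,0,0,1,0],[0,0,0,0,0,0,0,1]]) ** mk (tb [[1,0,0,0,0,0,0,0],[0,1,0,0,0,0,0,0],[0,0,- 1,0,0,0,0,0],[0,0,0,1,0,0,0,0],[0,0,0,0,1,0,0,0],[0,0,0,0,0,1,0,0],[0,0,0,0,0,0,1,0],[0,0,0,0,0,0,0,1]]) = mk (tb [[1/2,1/2,1/2,1/2,0,0,0,0],[1/2,- 1/2,1/2,- 1/2,0,0,0,0],[1/2,1/2,- 1/2,- 1/2,0,0,0,0],[1/2,- 1/2,- 1/2,1/2,0,0,0,0],[0,0,0,0,1,0,0,0],[0,0,0,0,0,1,0,0],[0,0,0,0,0,0,1,0],[0,0,0,0,0,0,0,1]])" unfolding mk_mult by (rule mk_eq_all) (simp add: all8 sum8e fmul_def tb_def tK12_def)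
  show ?thesis by (simp only: K0123_tb K12_tb d1 d2 fs s1 s2 s3 s4 s5 tK0123_def)
qed
lemma set1_basic:
  assumes G: "closedG G" and g: "X0 \<in> G" "CX01 \<in> G" "CCX12 \<in> G" "K0123 \<in> G"
  shows "(\<forall>a<8. \<forall>b<8. Sw a b \<in> G) \<and> (\<forall>a<8. Dg a \<in> G)"
proof -
  have P: "\<forall>w. set w \<subseteq> {..<4} \<longrightarrow> perm_mat (pl (wp gl1 w)) \<in> G"
    using gl1_G[OF G g] by blast
  have sw: "\<forall>a<8. \<forall>b<8. Sw a b \<in> G" by (rule Sw_all[OF G Sw0_1[OF G P]])
  have "wp gl1 [1,0,3,2,1,2,3,1,0,3,2,1] = [0,3,4,5,1,2,6,7]" by (simp add: gdefs)
  moreover have "perm_mat (pl (wp gl1 [1,0,3,2,1,2,3,1,0,3,2,1])) \<in> G" by (rule P[rule_format]) auto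
  ultimately have r1: "perm_mat (pl [0,3,4,5,1,2,6,7]) \<in> G" by simp
  have "wp gl1 [1,2,3,0,1,0,3,2,0,3,1,2,1,0,1] = [5,4,1,3,0,2,6,7]" by (simp add: gdefs)
  moreover have "perm_mat (pl (wp gl1 [1,2,3,0,1,0,3,2,0,3,1,2,1,0,1])) \<in> G" by (rule P[rule_format]) auto
  ultimately have r2: "perm_mat (pl [5,4,1,3,0,2,6,7]) \<in> G" by simp
  have "wp gl1 [1,2,3,2,0,3,1,2,0,3,2,0,3,1,0,1] = [4,1,5,3,0,2,6,7]" by (simp add: gdefs)
  moreover have "perm_mat (pl (wp gl1 [1,2,3,2,0,3,1,2,0,3,2,0,3,1,0,1])) \<in> G" by (rule P[rule_format]) auto
  ultimately have r3: "perm_mat (pl [4,1,5,3,0,2,6,7]) \<in> G" by simp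
  have "wp gl1 [3,1,2,0,3,2,0,3,2,1] = [0,1,4,5,2,3,6,7]" by (simp add: gdefs)
  moreover have "perm_mat (pl (wp gl1 [3,1,2,0,3,2,0,3,2,1])) \<in> G" by (rule P[rule_format]) auto
  ultimately have r4: "perm_mat (pl [0,1,4,5,2,3,6,7]) \<in> G" by simp
  have "Dg 2 \<in> G" unfolding D2_eq using G g(4) r1 r2 r3 r4 sw by (simp add: closedG_mult)
  then have "\<forall>a<8. Dg a \<in> G" using Dg_all[OF G sw] by simp
  then show ?thesis using sw by simp
qed

lemma set2_basic:
  assumes G: "closedG G" and g: "X0 \<in> G" "CX01 \<in> G" "CCX12 \<in> G" "K12 \<in> G" "CCZ \<in> G"
  shows "(\<forall>a<8. \<forall>b<8. Sw a b \<in> G) \<and> (\<forall>a<8. Dg a \<in> G) \<and> K0123 \<in> G"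
proof -
  have P: "\<forall>w. set w \<subseteq> {..<4} \<longrightarrow> perm_mat (pl (wp gl2 w)) \<in> G"
    using gl2_G[OF G g(1-4)] by blast
  have sw: "\<forall>a<8. \<forall>b<8. Sw a b \<in> G" by (rule Sw_all[OF G Sw0_2[OF G P]])
  have "CCZ = Dg 7" unfolding CCZ_tb Dg_def by (rule mk_eq_all) (simp add: all8 tb_def tCCZ_def)
  then have "\<forall>a<8. Dg a \<in> G" using Dg_all[OF G sw, of 7] g(5) by simp
  moreover have "K0123 \<in> G" unfolding K0123_eq using G g(4) sw calculation by (simp add: closedG_mult)
  ultimately show ?thesis using sw by simp
qed

definition fixes_f :: "nat \<Rightarrow> (nat \<Rightarrow> nat \<Rightarrow> real) \<Rightarrow> bool" where
  "fixes_f j f \<longleftrightarrow> (\<forall>r<8. \<forall>c<8. j < c \<longrightarrow> f r c = (if r = c then 1 else 0))"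
definition app :: "(nat \<Rightarrow> nat \<Rightarrow> real) \<Rightarrow> (nat \<Rightarrow> real) \<Rightarrow> nat \<Rightarrow> real" where
  "app f x r = (\<Sum>c<8. f r c * x c)"

lemma app_fmul: "app (fmul f g) x r = app f (app g x) r"
proof -
  have "app (fmul f g) x r = (\<Sum>c<8. \<Sum>k<8. f r k * g k c * x c)"
    unfolding app_def fmul_def by (simp add: sum_distrib_right)
  also have "\<dots> = (\<Sum>k<8. \<Sum>c<8. f r k * g k c * x c)" by (rule sum.swap)
  also have "\<dots> = app f (app g x) r"
    unfolding app_def by (simp add: sum_distrib_left mult.assoc)
  finally show ?thesis .
qed

lemma app_cong: "\<forall>c<8. x c = y c \<Longrightarrow> app f x r = app f y r"
  unfolding app_def by (intro sum.cong) auto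

lemma app_scale: "app f (\<lambda>c. a * x c) r = a * app f x r"
  unfolding app_def by (simp add: sum_distrib_left algebra_simps)

lemma fixes_fmul:
  assumes "fixes_f j f" "fixes_f j g" shows "fixes_f j (fmul f g)"
  unfolding fixes_f_def
proof (intro allI impI)
  fix r c :: nat assume rc: "r < 8" "c < 8" "j < c"
  have "fmul f g r c = (\<Sum>k<8. if k = c then f r k else 0)"
    unfolding fmul_def using assms(2) rc unfolding fixes_f_def by (intro sum.cong) auto
  also have "\<dots> = f r c" using rc by simp
  finally show "fmul f g r c = (if r = c then 1 else 0)"
    using assms(1) rc unfolding fixes_f_def by simp
qed

definition idm :: "nat \<Rightarrow> nat \<Rightarrow> real" where "idm r c = (if r = c then 1 else 0)"
definition swm :: "nat \<Rightarrow> nat \<Rightarrow> nat \<Rightarrow> nat \<Rightarrow> real" where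
  "swm a b = (\<lambda>r c. if r = swf a b c then 1 else 0)"
definition dgm :: "nat \<Rightarrow> nat \<Rightarrow> nat \<Rightarrow> real" where
  "dgm a = (\<lambda>r c. if r = c then (if r = a then -1 else 1) else 0)"
definition km :: "nat \<Rightarrow> nat \<Rightarrow> real" where
  "km = (\<lambda>r c. if r < 4 \<and> c < 4 then hh r c else if r = c then 1 else 0)"

lemma mk_idm: "mk idm = mat 1" unfolding idm_def mat1_mk ..
lemma mk_swm: "mk (swm a b) = Sw a b" unfolding swm_def Sw_def perm_mat_mk ..
lemma mk_dgm: "mk (dgm a) = Dg a" unfolding dgm_def Dg_def ..
lemma mk_km: "mk km = K0123" unfolding km_def by (simp add: K0123_def mk_def)

lemma fixes_idm: "fixes_f j idm" by (simp add: fixes_f_def idm_def)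
lemma fixes_swm: "a \<le> j \<Longrightarrow> b \<le> j \<Longrightarrow> fixes_f j (swm a b)"
  by (auto simp: fixes_f_def swm_def swf_def)
lemma fixes_dgm: "a \<le> j \<Longrightarrow> fixes_f j (dgm a)" by (auto simp: fixes_f_def dgm_def)
lemma fixes_km: "3 \<le> j \<Longrightarrow> fixes_f j km" by (auto simp: fixes_f_def km_def)

lemma app_idm: "r < 8 \<Longrightarrow> app idm x r = x r"
proof -
  assume r: "r < 8"
  have "app idm x r = (\<Sum>c<8. if c = r then x c else 0)"
    unfolding app_def idm_def by (intro sum.cong) auto
  then show ?thesis using r by simp
qed

lemma app_swm: "a < 8 \<Longrightarrow> b < 8 \<Longrightarrow> r < 8 \<Longrightarrow> app (swm a b) x r = x (swf a b r)"
proof -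
  assume ab: "a < 8" "b < 8" and r: "r < 8"
  have "app (swm a b) x r = (\<Sum>c<8. if c = swf a b r then x c else 0)"
    unfolding app_def swm_def by (intro sum.cong) (auto simp: swf_def)
  then show ?thesis using swf_lt[OF ab r] by simp
qed

lemma app_dgm: "r < 8 \<Longrightarrow> app (dgm a) x r = (if r = a then - x r else x r)"
proof -
  assume r: "r < 8"
  have "app (dgm a) x r = (\<Sum>c<8. if c = r then (if r = a then - x r else x r) else 0)"
    unfolding app_def dgm_def by (intro sum.cong) auto
  then show ?thesis using r by simp
qed

lemma app_km_hi: "4 \<le> r \<Longrightarrow> r < 8 \<Longrightarrow> app km x r = x r"
proof -
  assume r: "4 \<le> r" "r < 8"
  have "app km x r = (\<Sum>c<8. if c = r then x c else 0)"
    unfolding app_def km_def using r by (intro sum.cong) auto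
  then show ?thesis using r by simp
qed

lemma app_km_lo:
  "app km x 0 = (x 0 + x 1 + x 2 + x 3) / 2"
  "app km x 1 = (x 0 - x 1 + x 2 - x 3) / 2"
  "app km x 2 = (x 0 + x 1 - x 2 - x 3) / 2"
  "app km x 3 = (x 0 - x 1 - x 2 + x 3) / 2"
  unfolding app_def km_def sum8e by (simp_all add: hh_def qbit_def; simp add: field_simps)+

definition supp :: "nat \<Rightarrow> (nat \<Rightarrow> int) \<Rightarrow> bool" where
  "supp j x \<longleftrightarrow> (\<forall>r. j < r \<longrightarrow> r < 8 \<longrightarrow> x r = 0)"

definition goal :: "(real^8^8) set \<Rightarrow> nat \<Rightarrow> (nat \<Rightarrow> int) \<Rightarrow> nat \<Rightarrow> bool" where
  "goal G j x k \<longleftrightarrow> (\<exists>f. mk f \<in> G \<and> fixes_f j f \<and>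
      (\<forall>r<8. app f (\<lambda>c. of_int (x c)) r = (if r = j then 2^k else 0)))"

lemma red:
  assumes G: "closedG G" and g: "mk g \<in> G" "fixes_f j g"
    and act: "\<forall>r<8. app g (\<lambda>c. of_int (x c)) r = of_int (y r)"
    and gy: "goal G j y k"
  shows "goal G j x k"
proof -
  obtain f where f: "mk f \<in> G" "fixes_f j f" "\<forall>r<8. app f (\<lambda>c. of_int (y c)) r = (if r = j then 2^k else 0)"
    using gy unfolding goal_def by blast
  have "mk (fmul f g) \<in> G" using closedG_mult[OF G f(1) g(1)] by (simp add: mk_mult)
  moreover have "fixes_f j (fmul f g)" using fixes_fmul f(2) g(2) by blast
  moreover have "app (fmul f g) (\<lambda>c. of_int (x c)) r = (if r = j then 2^k else 0)" if "r < 8" for r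
  proof -
    have "app (fmul f g) (\<lambda>c. of_int (x c)) r = app f (app g (\<lambda>c. of_int (x c))) r" by (rule app_fmul)
    also have "\<dots> = app f (\<lambda>c. of_int (y c)) r" using act by (intro app_cong) auto
    finally show ?thesis using f(3) that by simp
  qed
  ultimately show ?thesis unfolding goal_def by blast
qed

lemma goal_unit:
  assumes G: "closedG G" and sw: "\<forall>a<8. \<forall>b<8. Sw a b \<in> G" and mj: "m \<le> j" "j < 8"
    and x: "\<forall>r<8. x r = (if r = m then 1 else 0)"
  shows "goal G j x 0"
proof -
  have g0: "goal G j (\<lambda>r. if r = j then 1 else 0) 0"
    unfolding goal_def using closedG_one[OF G] mk_idm fixes_idm app_idm
    by (intro exI[of _ idm]) auto
  have s: "mk (swm m j) \<in> G" using sw mj by (simp add: mk_swm)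
  have act: "\<forall>r<8. app (swm m j) (\<lambda>c. of_int (x c)) r = of_int (if r = j then 1 else 0)"
  proof (intro allI impI)
    fix r :: nat assume r: "r < 8"
    have "app (swm m j) (\<lambda>c. of_int (x c)) r = of_int (x (swf m j r))"
      using app_swm mj r by simp
    also have "\<dots> = of_int (if r = j then 1 else 0)"
      using x swf_lt[of m j r] mj r by (auto simp: swf_def)
    finally show "app (swm m j) (\<lambda>c. of_int (x c)) r = of_int (if r = j then 1 else 0)" .
  qed
  show ?thesis by (rule red[OF G s fixes_swm[OF mj(1) order_refl] act g0])
qed

lemma sq_one:
  fixes x :: "nat \<Rightarrow> int"
  assumes "(\<Sum>r<8. (x r)^2) = 1"
  shows "\<exists>m<8. (x m = 1 \<or> x m = -1) \<and> (\<forall>r<8. r \<noteq> m \<longrightarrow> x r = 0)"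
proof -
  obtain m where m: "m < 8" "x m \<noteq> 0"
  proof (rule ccontr)
    assume "\<not> thesis"
    then have "\<forall>r<8. x r = 0" using that by blast
    then have "(\<Sum>r<8. (x r)^2) = 0" by simp
    then show False using assms by simp
  qed
  have split: "(\<Sum>r<8. (x r)^2) = (x m)^2 + (\<Sum>r\<in>{..<8} - {m}. (x r)^2)"
    using m(1) by (simp add: sum.remove)
  have rest: "(\<Sum>r\<in>{..<8} - {m}. (x r)^2) \<ge> 0" by (simp add: sum_nonneg)
  have "(x m)^2 > 0" using m(2) by simp
  then have "(x m)^2 \<ge> 1" using int_one_le_iff_zero_less by blast
  then have xm: "(x m)^2 = 1" and r0: "(\<Sum>r\<in>{..<8} - {m}. (x r)^2) = 0" using split assms rest by linarith+
  have "\<forall>r\<in>{..<8} - {m}. (x r)^2 = 0"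
    using r0 sum_nonneg_eq_0_iff[of "{..<8} - {m}" "\<lambda>r. (x r)^2"] by simp
  then have "\<forall>r<8. r \<noteq> m \<longrightarrow> x r = 0" by auto
  moreover have "x m = 1 \<or> x m = -1" using xm by (simp add: power2_eq_1_iff)
  ultimately show ?thesis using m(1) by blast
qed

lemma goal_zero:
  assumes G: "closedG G" and sw: "\<forall>a<8. \<forall>b<8. Sw a b \<in> G" and dg: "\<forall>a<8. Dg a \<in> G"
    and j: "j < 8" and s: "supp j x" and n: "(\<Sum>r<8. (x r)^2) = 4^0"
  shows "goal G j x 0"
proof -
  obtain m where m: "m < 8" "x m = 1 \<or> x m = -1" "\<forall>r<8. r \<noteq> m \<longrightarrow> x r = 0"
    using sq_one n by auto
  have mj: "m \<le> j" using s m unfolding supp_def by (metis not_le one_neq_zero zero_neq_neg_one)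
  define y where "y = (\<lambda>r. if r = m then 1 else (0::int))"
  have gy: "goal G j y 0" by (rule goal_unit[OF G sw mj j]) (simp add: y_def)
  show ?thesis
  proof (cases "x m = 1")
    case True
    have "\<forall>r<8. x r = y r" using m True by (auto simp: y_def)
    then show ?thesis using gy unfolding goal_def
      by (metis (no_types, lifting) app_cong)
  next
    case False
    then have xm: "x m = -1" using m by simp
    have d: "mk (dgm m) \<in> G" using dg m by (simp add: mk_dgm)
    have act: "\<forall>r<8. app (dgm m) (\<lambda>c. of_int (x c)) r = of_int (y r)"
      using app_dgm m xm by (auto simp: y_def)
    show ?thesis by (rule red[OF G d fixes_dgm[OF mj] act gy])
  qed
qed

definition Od :: "(nat \<Rightarrow> int) \<Rightarrow> nat set" where "Od x = {..<8} \<inter> {r. odd (x r)}"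
definition O4 :: "(nat \<Rightarrow> int) \<Rightarrow> nat set" where "O4 x = {4..<8} \<inter> {r. odd (x r)}"
definition mu :: "(nat \<Rightarrow> int) \<Rightarrow> nat" where "mu x = 9 * card (Od x) + card (O4 x)"

lemma fin_Od [simp]: "finite (Od x)" by (simp add: Od_def)
lemma fin_O4 [simp]: "finite (O4 x)" by (simp add: O4_def)

lemma sq_mod4: "(4::int) dvd ((a::int)^2 - of_bool (odd a))"
proof (cases "even a")
  case True then obtain b where "a = 2 * b" by blast
  then show ?thesis by (simp add: power2_eq_square)
next
  case False then obtain b where "a = 2 * b + 1" using oddE by blast
  then have "a^2 - of_bool (odd a) = 4 * (b * b + b)" by (simp add: power2_eq_square algebra_simps)
  then show ?thesis by simp
qed
lemma count4:
  fixes x :: "nat \<Rightarrow> int"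
  assumes "(\<Sum>r<8. (x r)^2) = (4::int)^(Suc k)"
  shows "4 dvd card (Od x)"
proof -
  have "(4::int) dvd (\<Sum>r<8. (x r)^2 - of_bool (odd (x r)))"
    by (rule dvd_sum) (rule sq_mod4)
  moreover have "(\<Sum>r<8. (x r)^2 - of_bool (odd (x r))) = (\<Sum>r<8. (x r)^2) - (\<Sum>r<8. of_bool (odd (x r)))"
    by (rule sum_subtractf)
  moreover have "(\<Sum>r<8. of_bool (odd (x r)) :: int) = int (card (Od x))"
    unfolding Od_def by (rule sum_of_bool_eq) simp_all
  ultimately have h: "(4::int) dvd 4^(Suc k) - int (card (Od x))" using assms by simp
  have "int (card (Od x)) = 4^(Suc k) - (4^(Suc k) - int (card (Od x)))" by simp
  also have "(4::int) dvd \<dots>" by (rule dvd_diff[OF _ h]) simp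
  finally have "int 4 dvd int (card (Od x))" by simp
  then show ?thesis by (simp only: int_dvd_int_iff)
qed
lemma sum_swf:
  assumes "p < 8" "q < 8"
  shows "(\<Sum>r<8. h (swf p q r)) = (\<Sum>r<8. (h r :: int))"
proof -
  have b: "bij_betw (swf p q) {..<8} {..<8}"
    by (rule bij_betwI[of _ _ _ "swf p q"]) (use assms in \<open>auto simp: swf_def\<close>)
  show ?thesis using sum.reindex_bij_betw[OF b, of h] .
qed

lemma kstep:
  fixes z :: "nat \<Rightarrow> int"
  assumes odd: "odd (z 0)" "odd (z 1)" "odd (z 2)" "odd (z 3)" and s4: "4 dvd (z 0 + z 1 + z 2 + z 3)"
  defines "y \<equiv> (\<lambda>r. if r = 0 then (z 0 + z 1 + z 2 + z 3) div 2
                 else if r = 1 then (z 0 - z 1 + z 2 - z 3) div 2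
                 else if r = 2 then (z 0 + z 1 - z 2 - z 3) div 2
                 else if r = 3 then (z 0 - z 1 - z 2 + z 3) div 2 else z r)"
  shows "\<forall>r<8. app km (\<lambda>c. of_int (z c)) r = of_int (y r)"
    and "even (y 0)" "even (y 1)" "even (y 2)" "even (y 3)"
    and "(\<Sum>r<8. (y r)^2) = (\<Sum>r<8. (z r)^2)"
proof -
  obtain a0 a1 a2 a3 where a: "z 0 = 2 * a0 + 1" "z 1 = 2 * a1 + 1" "z 2 = 2 * a2 + 1" "z 3 = 2 * a3 + 1"
    using odd by (metis oddE)
  have e1: "z 0 - z 1 + z 2 - z 3 = (z 0 + z 1 + z 2 + z 3) - 4 * (a1 + a3 + 1)" using a by simp
  have e2: "z 0 + z 1 - z 2 - z 3 = (z 0 + z 1 + z 2 + z 3) - 4 * (a2 + a3 + 1)" using a by simp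
  have e3: "z 0 - z 1 - z 2 + z 3 = (z 0 + z 1 + z 2 + z 3) - 4 * (a1 + a2 + 1)" using a by simp
  have d1: "4 dvd (z 0 - z 1 + z 2 - z 3)" unfolding e1 using s4 by (intro dvd_diff) simp_all
  have d2: "4 dvd (z 0 + z 1 - z 2 - z 3)" unfolding e2 using s4 by (intro dvd_diff) simp_all
  have d3: "4 dvd (z 0 - z 1 - z 2 + z 3)" unfolding e3 using s4 by (intro dvd_diff) simp_all
  obtain t0 t1 t2 t3 where t: "z 0 + z 1 + z 2 + z 3 = 4 * t0" "z 0 - z 1 + z 2 - z 3 = 4 * t1"
      "z 0 + z 1 - z 2 - z 3 = 4 * t2" "z 0 - z 1 - z 2 + z 3 = 4 * t3"
    using s4 d1 d2 d3 by (metis dvd_def)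
  have y: "y 0 = 2 * t0" "y 1 = 2 * t1" "y 2 = 2 * t2" "y 3 = 2 * t3"
    unfolding y_def using t by simp_all
  show "\<forall>r<8. app km (\<lambda>c. of_int (z c)) r = of_int (y r)"
  proof (intro allI impI)
    fix r :: nat assume r: "r < 8"
    show "app km (\<lambda>c. of_int (z c)) r = of_int (y r)"
    proof (cases "r < 4")
      case True
      then have "r = 0 \<or> r = 1 \<or> r = 2 \<or> r = 3" by auto
      moreover have "(of_int (z 0) + of_int (z 1) + of_int (z 2) + of_int (z 3)) / 2 = (of_int (y 0) :: real)"
        using arg_cong[OF t(1), of "of_int :: int \<Rightarrow> real"] y by simp
      moreover have "(of_int (z 0) - of_int (z 1) + of_int (z 2) - of_int (z 3)) / 2 = (of_int (y 1) :: real)"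
        using arg_cong[OF t(2), of "of_int :: int \<Rightarrow> real"] y by simp
      moreover have "(of_int (z 0) + of_int (z 1) - of_int (z 2) - of_int (z 3)) / 2 = (of_int (y 2) :: real)"
        using arg_cong[OF t(3), of "of_int :: int \<Rightarrow> real"] y by simp
      moreover have "(of_int (z 0) - of_int (z 1) - of_int (z 2) + of_int (z 3)) / 2 = (of_int (y 3) :: real)"
        using arg_cong[OF t(4), of "of_int :: int \<Rightarrow> real"] y by simp
      ultimately show ?thesis using app_km_lo[of "\<lambda>c. of_int (z c)"] by auto
    next
      case False
      then show ?thesis using app_km_hi[of r] r by (simp add: y_def)
    qed
  qed
  show "even (y 0)" "even (y 1)" "even (y 2)" "even (y 3)" using y by simp_all
  have z: "z 0 = t0 + t1 + t2 + t3" "z 1 = t0 - t1 + t2 - t3" "z 2 = t0 + t1 - t2 - t3" "z 3 = t0 - t1 - t2 + t3"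
    using t by linarith+
  have "(y 0)^2 + (y 1)^2 + (y 2)^2 + (y 3)^2 = (z 0)^2 + (z 1)^2 + (z 2)^2 + (z 3)^2"
    unfolding y z by (simp add: power2_eq_square algebra_simps)
  moreover have "y r = z r" if "r \<ge> 4" for r using that by (simp add: y_def)
  ultimately show "(\<Sum>r<8. (y r)^2) = (\<Sum>r<8. (z r)^2)"
    unfolding sum8e by simp
qed

lemma step:
  fixes x :: "nat \<Rightarrow> int"
  assumes G: "closedG G" and sw: "\<forall>a<8. \<forall>b<8. Sw a b \<in> G" and dg: "\<forall>a<8. Dg a \<in> G" and K: "K0123 \<in> G"
    and j: "j < 8" and sx: "supp j x" and nx: "(\<Sum>r<8. (x r)^2) = 4^(Suc k)"
    and IHk: "\<forall>y. supp j y \<longrightarrow> (\<Sum>r<8. (y r)^2) = 4^k \<longrightarrow> goal G j y k"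
    and IHm: "\<forall>y. mu y < mu x \<longrightarrow> supp j y \<longrightarrow> (\<Sum>r<8. (y r)^2) = 4^(Suc k) \<longrightarrow> goal G j y (Suc k)"
  shows "goal G j x (Suc k)"
proof (cases "\<forall>r<8. even (x r)")
  case True
  define y where "y = (\<lambda>r. x r div 2)"
  have xy: "x r = 2 * y r" if "r < 8" for r using True that by (simp add: y_def)
  have sy: "supp j y" using sx unfolding supp_def y_def by simp
  have "(\<Sum>r<8. (x r)^2) = (\<Sum>r<8. 4 * (y r)^2)"
    by (intro sum.cong) (auto simp: xy power2_eq_square)
  then have "4 * (\<Sum>r<8. (y r)^2) = 4 * 4^k" using nx by (simp add: sum_distrib_left)
  then have ny: "(\<Sum>r<8. (y r)^2) = 4^k" by simp
  obtain f where f: "mk f \<in> G" "fixes_f j f" "\<forall>r<8. app f (\<lambda>c. of_int (y c)) r = (if r = j then 2^k else 0)"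
    using IHk sy ny unfolding goal_def by blast
  have "app f (\<lambda>c. of_int (x c)) r = (if r = j then 2^Suc k else 0)" if "r < 8" for r
  proof -
    have "app f (\<lambda>c. of_int (x c)) r = app f (\<lambda>c. 2 * of_int (y c)) r"
      using xy by (intro app_cong) auto
    also have "\<dots> = 2 * app f (\<lambda>c. of_int (y c)) r" by (rule app_scale)
    finally show ?thesis using f(3) that by simp
  qed
  then show ?thesis using f(1,2) unfolding goal_def by blast
next
  case False
  then obtain r0 where r0: "r0 < 8" "odd (x r0)" by blast
  have "r0 \<in> Od x" using r0 by (simp add: Od_def)
  then have "card (Od x) \<noteq> 0" by auto
  moreover have "4 dvd card (Od x)" by (rule count4[OF nx])
  ultimately have c4: "card (Od x) \<ge> 4" by (meson dvd_imp_le not_gr0)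
  have sub_lt: "Od x \<subseteq> {..<8}" "O4 x \<subseteq> Od x" by (auto simp: Od_def O4_def)
  show ?thesis
  proof (cases "\<forall>p<4. odd (x p)")
    case False
    then obtain p where p: "p < 4" "even (x p)" by blast
    have "\<exists>q. 4 \<le> q \<and> q < 8 \<and> odd (x q)"
    proof (rule ccontr)
      assume "\<nexists>q. 4 \<le> q \<and> q < 8 \<and> odd (x q)"
      then have "Od x \<subseteq> {0,1,2,3} - {p}" using p by (auto simp: Od_def)
      then have "card (Od x) \<le> card ({0,1,2,3::nat} - {p})" by (intro card_mono) auto
      also have "\<dots> = card {0,1,2,3::nat} - 1"
        using p by (intro card_Diff_singleton) auto
      also have "\<dots> = 3" by simp
      finally show False using c4 by simp
    qed
    then obtain q where q: "4 \<le> q" "q < 8" "odd (x q)" by blast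
    have qj: "q \<le> j"
    proof (rule ccontr)
      assume "\<not> q \<le> j" then have "x q = 0" using sx q unfolding supp_def by simp
      then show False using q(3) by simp
    qed
    have pj: "p \<le> j" using p q qj by simp
    have p8: "p < 8" using p by simp
    define y where "y = (\<lambda>r. x (swf p q r))"
    have sy: "supp j y" using sx pj qj unfolding supp_def y_def swf_def by auto
    have ny: "(\<Sum>r<8. (y r)^2) = 4^(Suc k)"
      unfolding y_def using sum_swf[OF p8 q(2), of "\<lambda>r. (x r)^2"] nx by simp
    have inv: "swf p q (swf p q r) = r" for r by (simp add: swf_def)
    have "Od y = swf p q ` Od x"
    proof
      show "Od y \<subseteq> swf p q ` Od x"
      proof
        fix r assume "r \<in> Od y"
        then have "swf p q r \<in> Od x" using swf_lt[OF p8 q(2)] by (simp add: Od_def y_def)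
        then show "r \<in> swf p q ` Od x" using inv by (metis image_eqI)
      qed
      show "swf p q ` Od x \<subseteq> Od y"
        using swf_lt[OF p8 q(2)] inv by (auto simp: Od_def y_def)
    qed
    moreover have "inj_on (swf p q) (Od x)" by (metis inv inj_on_inverseI)
    ultimately have c1: "card (Od y) = card (Od x)" by (simp add: card_image)
    have "O4 y = O4 x - {q}"
      using p q by (auto simp: O4_def y_def swf_def)
    moreover have "q \<in> O4 x" using q by (simp add: O4_def)
    ultimately have c2: "card (O4 y) < card (O4 x)"
      using card_Diff1_less[of "O4 x" q] by simp
    have mu: "mu y < mu x" unfolding mu_def using c1 c2 by simp
    have gy: "goal G j y (Suc k)" using IHm mu sy ny by blast
    have s: "mk (swm p q) \<in> G" using sw p8 q by (simp add: mk_swm)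
    have act: "\<forall>r<8. app (swm p q) (\<lambda>c. of_int (x c)) r = of_int (y r)"
      using app_swm[OF p8 q(2)] by (simp add: y_def)
    show ?thesis by (rule red[OF G s fixes_swm[OF pj qj] act gy])
  next
    case True
    then have o: "odd (x 0)" "odd (x 1)" "odd (x 2)" "odd (x 3)" by simp_all
    have j3: "3 \<le> j"
    proof (rule ccontr)
      assume "\<not> 3 \<le> j" then have "x 3 = 0" using sx unfolding supp_def by simp
      then show False using o(4) by simp
    qed
    define s where "s = x 0 + x 1 + x 2 + x 3"
    define z where "z = (\<lambda>r. if r = 0 \<and> \<not> 4 dvd s then - x 0 else x r)"
    have zo: "odd (z 0)" "odd (z 1)" "odd (z 2)" "odd (z 3)" using o by (simp_all add: z_def)
    have z4: "4 dvd (z 0 + z 1 + z 2 + z 3)"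
    proof (cases "4 dvd s")
      case True then show ?thesis by (simp add: z_def s_def)
    next
      case False
      obtain a0 where a0: "x 0 = 2 * a0 + 1" using o(1) by (metis oddE)
      have "z 0 + z 1 + z 2 + z 3 = s - 4 * a0 - 2" using False a0 by (simp add: z_def s_def)
      moreover have "even s" using o unfolding s_def by simp
      ultimately show ?thesis using False by presburger
    qed
    have zr: "z r = x r" if "r \<noteq> 0" for r using that by (simp add: z_def)
    have z2: "(z r)^2 = (x r)^2" for r by (simp add: z_def)
    have zodd: "odd (z r) = odd (x r)" for r by (simp add: z_def)
    have sz: "supp j z" using sx unfolding supp_def z_def by simp
    have nz: "(\<Sum>r<8. (z r)^2) = 4^(Suc k)" using nx z2 by simp
    have Odz: "Od z = Od x" and O4z: "O4 z = O4 x" by (simp_all add: Od_def O4_def zodd)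
    define y where "y = (\<lambda>r. if r = 0 then (z 0 + z 1 + z 2 + z 3) div 2
                 else if r = 1 then (z 0 - z 1 + z 2 - z 3) div 2
                 else if r = 2 then (z 0 + z 1 - z 2 - z 3) div 2
                 else if r = 3 then (z 0 - z 1 - z 2 + z 3) div 2 else z r)"
    have ks1: "\<forall>r<8. app km (\<lambda>c. of_int (z c)) r = of_int (y r)"
      using kstep(1)[OF zo z4] by (simp add: y_def)
    have ks2: "even (y 0)" "even (y 1)" "even (y 2)" "even (y 3)"
      using kstep(2-5)[OF zo z4] by (simp_all add: y_def)
    have ks6: "(\<Sum>r<8. (y r)^2) = (\<Sum>r<8. (z r)^2)"
      using kstep(6)[OF zo z4] by (simp add: y_def)
    have yr: "y r = z r" if "r \<ge> 4" for r using that by (simp add: y_def)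
    have sy: "supp j y" using sz j3 yr unfolding supp_def by auto
    have ny: "(\<Sum>r<8. (y r)^2) = 4^(Suc k)" using ks6 nz by simp
    have "Od y = Od z - {0,1,2,3}"
    proof -
      have "odd (y r) \<longleftrightarrow> odd (z r) \<and> r \<notin> {0,1,2,3}" for r
      proof (cases "r \<ge> 4")
        case True then show ?thesis using yr[of r] by auto
      next
        case False then have "r = 0 \<or> r = 1 \<or> r = 2 \<or> r = 3" by auto
        then show ?thesis using ks2 by auto
      qed
      then show ?thesis by (auto simp: Od_def)
    qed
    moreover have "{0,1,2,3} \<subseteq> Od z" using zo by (simp add: Od_def)
    ultimately have c1: "card (Od y) = card (Od z) - 4"
      by (simp add: card_Diff_subset)
    have "O4 y = O4 z" using yr by (auto simp: O4_def)
    then have mu: "mu y < mu x" unfolding mu_def using c1 Odz O4z c4 by simp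
    have gy: "goal G j y (Suc k)" using IHm mu sy ny by blast
    have kk: "mk km \<in> G" using K by (simp add: mk_km)
    have gz: "goal G j z (Suc k)" by (rule red[OF G kk fixes_km[OF j3] ks1 gy])
    show ?thesis
    proof (cases "4 dvd s")
      case True
      then have "z = x" by (simp add: z_def fun_eq_iff)
      then show ?thesis using gz by simp
    next
      case False
      have d: "mk (dgm 0) \<in> G" using dg by (simp add: mk_dgm)
      have act: "\<forall>r<8. app (dgm 0) (\<lambda>c. of_int (x c)) r = of_int (z r)"
        using app_dgm False by (simp add: z_def)
      show ?thesis by (rule red[OF G d fixes_dgm[of 0 j] act gz]) simp
    qed
  qed
qed

lemma CL:
  assumes G: "closedG G" and sw: "\<forall>a<8. \<forall>b<8. Sw a b \<in> G" and dg: "\<forall>a<8. Dg a \<in> G" and K: "K0123 \<in> G"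
    and j: "j < 8"
  shows "\<forall>x. supp j x \<longrightarrow> (\<Sum>r<8. (x r)^2) = 4^k \<longrightarrow> goal G j x k"
proof (induction k)
  case 0
  then show ?case using goal_zero[OF G sw dg j] by blast
next
  case (Suc k)
  have "supp j x \<longrightarrow> (\<Sum>r<8. (x r)^2) = 4^(Suc k) \<longrightarrow> goal G j x (Suc k)" for x
  proof (induction "mu x" arbitrary: x rule: less_induct)
    case less
    show ?case using step[OF G sw dg K j _ _ Suc.IH] less by blast
  qed
  then show ?case by blast
qed

lemma mk_entry_eq: "mk f = mk g \<Longrightarrow> r < 8 \<Longrightarrow> c < 8 \<Longrightarrow> f r c = g r c"
  by (metis mk_entry idx_ix)

lemma dyadic_col:
  fixes u :: "nat \<Rightarrow> real"
  assumes "\<forall>r<8. dyadic (u r)"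
  shows "\<exists>K x. \<forall>r<8. u r = of_int (x r) / 2^K"
proof -
  have "\<forall>r. \<exists>p. r < 8 \<longrightarrow> u r = of_int (fst p) / 2^(snd p)"
    using assms unfolding dyadic_def by fastforce
  then obtain g where g: "\<forall>r. r < 8 \<longrightarrow> u r = of_int (fst (g r)) / 2^(snd (g r))"
    by (metis choice)
  define K where "K = (\<Sum>r<8. snd (g r))"
  define x where "x r = fst (g r) * 2^(K - snd (g r))" for r
  have "u r = of_int (x r) / 2^K" if r: "r < 8" for r
  proof -
    have le: "snd (g r) \<le> K" unfolding K_def using r by (intro member_le_sum) auto
    have "(2::real)^K = 2^(K - snd (g r)) * 2^(snd (g r))"
      using le by (simp add: power_add[symmetric])
    then show ?thesis using g r by (simp add: x_def)
  qed
  then show ?thesis by blast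
qed

lemma gen_main:
  assumes G: "closedG G" "G \<subseteq> O8D" and sw: "\<forall>a<8. \<forall>b<8. Sw a b \<in> G"
    and dg: "\<forall>a<8. Dg a \<in> G" and K: "K0123 \<in> G"
  shows "\<forall>M\<in>O8D. (\<forall>r<8. \<forall>c<8. n \<le> c \<longrightarrow> M $ ix r $ ix c = (if r = c then 1 else 0)) \<longrightarrow> M \<in> G"
proof (induction n)
  case 0
  show ?case
  proof (intro ballI impI)
    fix M :: "real^8^8" assume h: "\<forall>r<8. \<forall>c<8. 0 \<le> c \<longrightarrow> M $ ix r $ ix c = (if r = c then 1 else 0)"
    have "M = mk (\<lambda>r c. M $ ix r $ ix c)" by (rule mk_of)
    also have "\<dots> = mat 1" unfolding mat1_mk using h by (intro mk_eqI) auto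
    finally show "M \<in> G" using closedG_one[OF G(1)] by simp
  qed
next
  case (Suc n)
  show ?case
  proof (intro ballI impI)
    fix M :: "real^8^8" assume M: "M \<in> O8D"
      and h: "\<forall>r<8. \<forall>c<8. Suc n \<le> c \<longrightarrow> M $ ix r $ ix c = (if r = c then 1 else 0)"
    show "M \<in> G"
    proof (cases "n < 8")
      case False
      then show ?thesis using Suc.IH M by auto
    next
      case True
      define m where "m = (\<lambda>r c. M $ ix r $ ix c)"
      have Mm: "M = mk m" unfolding m_def by (rule mk_of)
      have hm: "m k c = (if k = c then 1 else 0)" if "k < 8" "c < 8" "n < c" for k c
        using h that unfolding m_def by simp
      have orth: "fmul (\<lambda>r c. m c r) m r c = (if r = c then 1 else 0)" if "r < 8" "c < 8" for r c
      proof -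
        have "transpose M ** M = mat 1" using M unfolding O8D_def orthogonal_matrix by simp
        then have "mk (fmul (\<lambda>r c. m c r) m) = mk (\<lambda>r c. if r = c then 1 else 0)"
          unfolding Mm mk_transpose mk_mult mat1_mk .
        then show ?thesis using mk_entry_eq that by blast
      qed
      define u where "u r = m r n" for r
      have supp_u: "u r = 0" if "n < r" "r < 8" for r
      proof -
        have "fmul (\<lambda>r c. m c r) m r n = 0" using orth[of r n] that True by simp
        moreover have "fmul (\<lambda>r c. m c r) m r n = (\<Sum>k<8. if k = r then m k n else 0)"
          unfolding fmul_def using hm that by (intro sum.cong) auto
        ultimately show ?thesis using that by (simp add: u_def)
      qed
      have norm: "(\<Sum>k<8. (u k)^2) = 1"
        using orth[of n n] True by (simp add: fmul_def u_def power2_eq_square)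
      have dy: "\<forall>r<8. dyadic (u r)" using M unfolding O8D_def u_def m_def by simp
      obtain Kx x where x: "\<forall>r<8. u r = of_int (x r) / 2^Kx" using dyadic_col[OF dy] by blast
      have sx: "supp n x" unfolding supp_def
      proof (intro allI impI)
        fix r assume "n < r" "r < 8"
        then have "of_int (x r) / (2::real)^Kx = 0" using supp_u x by simp
        then show "x r = 0" by simp
      qed
      have nx: "(\<Sum>r<8. (x r)^2) = 4^Kx"
      proof -
        have "(\<Sum>r<8. (u r)^2) = (\<Sum>r<8. (of_int (x r))^2 / (2^Kx)^2)"
          using x by (intro sum.cong) (auto simp: power_divide)
        also have "\<dots> = (\<Sum>r<8. (of_int (x r))^2) / (2^Kx)^2" by (simp add: sum_divide_distrib)
        finally have "(\<Sum>r<8. (of_int (x r) :: real)^2) = (2^Kx)^2" using norm by simp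
        moreover have "((2::real)^Kx)^2 = (2^2)^Kx" by (metis power_mult mult.commute)
        ultimately have "of_int (\<Sum>r<8. (x r)^2) = (of_int (4^Kx) :: real)"
          by simp
        then show ?thesis by (simp only: of_int_eq_iff)
      qed
      obtain f where f: "mk f \<in> G" "fixes_f n f" "\<forall>r<8. app f (\<lambda>c. of_int (x c)) r = (if r = n then 2^Kx else 0)"
        using CL[OF G(1) sw dg K True] sx nx unfolding goal_def by blast
      define M' where "M' = mk f ** M"
      have M'O: "M' \<in> O8D" using O8D_mult G(2) f(1) M unfolding M'_def by blast
      have M'e: "M' = mk (fmul f m)" unfolding M'_def Mm mk_mult ..
      have "\<forall>r<8. \<forall>c<8. n \<le> c \<longrightarrow> M' $ ix r $ ix c = (if r = c then 1 else 0)"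
      proof (intro allI impI)
        fix r c :: nat assume rc: "r < 8" "c < 8" "n \<le> c"
        have e: "M' $ ix r $ ix c = fmul f m r c" unfolding M'e using rc by simp
        show "M' $ ix r $ ix c = (if r = c then 1 else 0)"
        proof (cases "c = n")
          case True
          have "fmul f m r c = app f u r" unfolding fmul_def app_def u_def True ..
          also have "\<dots> = app f (\<lambda>c. (1 / 2^Kx) * of_int (x c)) r" using x by (intro app_cong) auto
          also have "\<dots> = (1 / 2^Kx) * app f (\<lambda>c. of_int (x c)) r" by (rule app_scale)
          also have "\<dots> = (if r = c then 1 else 0)" using f(3) rc True by simp
          finally show ?thesis using e by simp
        next
          case False
          then have nc: "n < c" using rc by simp
          have "fmul f m r c = (\<Sum>k<8. if k = c then f r k else 0)"
            unfolding fmul_def using hm rc nc by (intro sum.cong) auto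
          also have "\<dots> = f r c" using rc by simp
          also have "\<dots> = (if r = c then 1 else 0)" using f(2) rc nc unfolding fixes_f_def by simp
          finally show ?thesis using e by simp
        qed
      qed
      then have "M' \<in> G" using Suc.IH M'O by blast
      moreover have "M = matrix_inv (mk f) ** M'"
      proof -
        have "mk f \<in> O8D" using G(2) f(1) by blast
        then have o: "orthogonal_matrix (mk f)" unfolding O8D_def by simp
        then have "matrix_inv (mk f) ** mk f = mat 1" using orth_inv[OF o] unfolding orthogonal_matrix by simp
        then show ?thesis unfolding M'_def by (simp add: matrix_mul_assoc)
      qed
      ultimately show ?thesis using closedG_mult[OF G(1) closedG_inv[OF G(1) f(1)]] by simp
    qed
  qed
qed

lemma generation:
  assumes G: "closedG G" "G \<subseteq> O8D" and sw: "\<forall>a<8. \<forall>b<8. Sw a b \<in> G"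
    and dg: "\<forall>a<8. Dg a \<in> G" and K: "K0123 \<in> G"
  shows "O8D \<subseteq> G"
  using gen_main[OF G sw dg K, of 8] by auto

definition mkv :: "(nat \<Rightarrow> real) \<Rightarrow> real^8" where "mkv u = (\<chi> i. u (idx i))"

lemma mk_mulv: "mk f *v mkv u = mkv (app f u)"
  by (simp add: matrix_vector_mult_def mk_def mkv_def app_def vec_eq_iff sum8[where h="\<lambda>k. f _ k * u k"])

lemma mkv_eqI: "\<forall>r<8. u r = v r \<Longrightarrow> mkv u = mkv v"
  by (simp add: mkv_def vec_eq_iff)

lemma mkv_eqD: "mkv u = mkv v \<Longrightarrow> r < 8 \<Longrightarrow> u r = v r"
  by (metis idx_ix mkv_def vec_lambda_beta)

lemma orthG: "A \<in> O8D \<Longrightarrow> orthogonal_matrix A" by (simp add: O8D_def)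

(* ---------- invariant 1: fixed vector ---------- *)
definition wvec :: "nat \<Rightarrow> real" where "wvec r = (if r = 0 then 2 else if r = 1 \<or> r = 2 then 1 else 0)"
definition Iw :: "(real^8^8) set" where "Iw = {M. orthogonal_matrix M \<and> M *v mkv wvec = mkv wvec}"

lemma closedG_Iw: "closedG Iw"
proof -
  have "matrix_inv A \<in> Iw" if A: "A \<in> Iw" for A
  proof -
    have o: "orthogonal_matrix A" and f: "A *v mkv wvec = mkv wvec" using A by (auto simp: Iw_def)
    have "transpose A *v mkv wvec = transpose A *v (A *v mkv wvec)" using f by simp
    also have "\<dots> = (transpose A ** A) *v mkv wvec" by (simp add: matrix_vector_mul_assoc)
    also have "\<dots> = mkv wvec" using o by (simp add: orthogonal_matrix)
    finally show ?thesis using o orth_inv[OF o] by (simp add: Iw_def)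
  qed
  moreover have "A ** B \<in> Iw" if "A \<in> Iw" "B \<in> Iw" for A B
    using that by (auto simp: Iw_def orthogonal_matrix_mul matrix_vector_mul_assoc[symmetric])
  ultimately show ?thesis unfolding closedG_def Iw_def by (auto simp: orthogonal_matrix_id)
qed

lemma Iw_tb: "mk (tb L) \<in> O8D \<Longrightarrow> \<forall>r<8. app (tb L) wvec r = wvec r \<Longrightarrow> mk (tb L) \<in> Iw"
  unfolding Iw_def using orthG mk_mulv mkv_eqI by auto

lemma CX01_Iw: "CX01 \<in> Iw"
  unfolding CX01_tb by (rule Iw_tb, rule CX01_O8D[unfolded CX01_tb], simp add: all8 app_def sum8e tb_def wvec_def tdefs)
lemma CCX12_Iw: "CCX12 \<in> Iw"
  unfolding CCX12_tb by (rule Iw_tb, rule CCX12_O8D[unfolded CCX12_tb], simp add: all8 app_def sum8e tb_def wvec_def tdefs)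
lemma K0123_Iw: "K0123 \<in> Iw"
  unfolding K0123_tb by (rule Iw_tb, rule K0123_O8D[unfolded K0123_tb], simp add: all8 app_def sum8e tb_def wvec_def tdefs)
lemma K12_Iw: "K12 \<in> Iw"
  unfolding K12_tb by (rule Iw_tb, rule K12_O8D[unfolded K12_tb], simp add: all8 app_def sum8e tb_def wvec_def tdefs)
lemma CCZ_Iw: "CCZ \<in> Iw"
  unfolding CCZ_tb by (rule Iw_tb, rule CCZ_O8D[unfolded CCZ_tb], simp add: all8 app_def sum8e tb_def wvec_def tdefs)
lemmas Iw_mem = CX01_Iw CCX12_Iw K0123_Iw K12_Iw CCZ_Iw

lemma X0_notIw: "X0 \<notin> Iw"
proof
  assume "X0 \<in> Iw"
  then have "mkv (app (tb tX0) wvec) = mkv wvec" by (simp add: Iw_def X0_tb mk_mulv)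
  from mkv_eqD[OF this, of 4] show False by (simp add: app_def sum8e tb_def wvec_def tX0_def)
qed

(* ---------- invariant 2: commuting with qubit swap ---------- *)
definition tSW :: "real list list" where
  "tSW = [[1,0,0,0,0,0,0,0],[0,0,1,0,0,0,0,0],[0,1,0,0,0,0,0,0],[0,0,0,1,0,0,0,0],
          [0,0,0,0,1,0,0,0],[0,0,0,0,0,0,1,0],[0,0,0,0,0,1,0,0],[0,0,0,0,0,0,0,1]]"
definition SWm :: "real^8^8" where "SWm = mk (tb tSW)"
definition Is :: "(real^8^8) set" where "Is = {M. orthogonal_matrix M \<and> M ** SWm = SWm ** M}"

lemma SWm_T: "transpose SWm = SWm"
  unfolding SWm_def mk_transpose by (rule mk_eq_all) (simp add: all8 tb_def tSW_def)

lemma closedG_Is: "closedG Is"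
proof -
  have "matrix_inv A \<in> Is" if A: "A \<in> Is" for A
  proof -
    have o: "orthogonal_matrix A" and c: "A ** SWm = SWm ** A" using A by (auto simp: Is_def)
    have "transpose (A ** SWm) = transpose (SWm ** A)" using c by simp
    then have "transpose A ** SWm = SWm ** transpose A" by (simp add: matrix_transpose_mul SWm_T)
    then show ?thesis using o orth_inv[OF o] by (simp add: Is_def)
  qed
  moreover have "A ** B \<in> Is" if "A \<in> Is" "B \<in> Is" for A B
  proof -
    have a: "A ** SWm = SWm ** A" and b: "B ** SWm = SWm ** B" using that by (auto simp: Is_def)
    have "(A ** B) ** SWm = A ** (B ** SWm)" by (simp add: matrix_mul_assoc)
    also have "\<dots> = A ** (SWm ** B)" using b by simp
    also have "\<dots> = (A ** SWm) ** B" by (simp add: matrix_mul_assoc)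
    also have "\<dots> = (SWm ** A) ** B" using a by simp
    also have "\<dots> = SWm ** (A ** B)" by (simp add: matrix_mul_assoc)
    finally show ?thesis using that by (simp add: Is_def orthogonal_matrix_mul)
  qed
  ultimately show ?thesis unfolding closedG_def Is_def by (auto simp: orthogonal_matrix_id)
qed

lemma Is_tb: "mk (tb L) \<in> O8D \<Longrightarrow> \<forall>r<8. \<forall>c<8. fmul (tb L) (tb tSW) r c = fmul (tb tSW) (tb L) r c \<Longrightarrow> mk (tb L) \<in> Is"
  unfolding Is_def SWm_def using orthG by (auto simp: mk_mult intro!: mk_eq_all)

lemma X0_Is: "X0 \<in> Is"
  unfolding X0_tb by (rule Is_tb, rule X0_O8D[unfolded X0_tb], simp add: all8 fmul_def sum8e tb_def tSW_def tdefs)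
lemma CCX12_Is: "CCX12 \<in> Is"
  unfolding CCX12_tb by (rule Is_tb, rule CCX12_O8D[unfolded CCX12_tb], simp add: all8 fmul_def sum8e tb_def tSW_def tdefs)
lemma K0123_Is: "K0123 \<in> Is"
  unfolding K0123_tb by (rule Is_tb, rule K0123_O8D[unfolded K0123_tb], simp add: all8 fmul_def sum8e tb_def tSW_def tdefs)
lemma K12_Is: "K12 \<in> Is"
  unfolding K12_tb by (rule Is_tb, rule K12_O8D[unfolded K12_tb], simp add: all8 fmul_def sum8e tb_def tSW_def tdefs)
lemma CCZ_Is: "CCZ \<in> Is"
  unfolding CCZ_tb by (rule Is_tb, rule CCZ_O8D[unfolded CCZ_tb], simp add: all8 fmul_def sum8e tb_def tSW_def tdefs)
lemmas Is_mem = X0_Is CCX12_Is K0123_Is K12_Is CCZ_Is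

lemma CX01_notIs: "CX01 \<notin> Is"
proof
  assume "CX01 \<in> Is"
  then have "mk (fmul (tb tCX01) (tb tSW)) = mk (fmul (tb tSW) (tb tCX01))"
    by (simp add: Is_def CX01_tb SWm_def mk_mult)
  from mk_entry_eq[OF this, of 4 5] show False by (simp add: fmul_def sum8e tb_def tSW_def tCX01_def)
qed

lemma prod_entry: "(A ** B) $ ix r $ ix c = (\<Sum>k<8. A $ ix r $ ix k * B $ ix k $ ix c)"
  using sum8[of "\<lambda>k. A $ ix r $ ix k * B $ ix k $ ix c"] by (simp add: matrix_matrix_mult_def)

lemma sum_nz: "(\<Sum>k<8. (g k :: real)) \<noteq> 0 \<Longrightarrow> \<exists>k<8. g k \<noteq> 0"
  by (metis lessThan_iff sum.neutral)

(* ---------- invariant 3: block structure ---------- *)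
definition blk :: "bool \<Rightarrow> real^8^8 \<Rightarrow> bool" where
  "blk b M \<longleftrightarrow> (\<forall>r<8. \<forall>c<8. M $ ix r $ ix c \<noteq> 0 \<longrightarrow> ((r < 4) = ((c < 4) = b)))"
definition Ib :: "(real^8^8) set" where "Ib = {M. orthogonal_matrix M \<and> (\<exists>b. blk b M)}"

lemma blk_mult: "blk b A \<Longrightarrow> blk b' B \<Longrightarrow> blk (b = b') (A ** B)"
  unfolding blk_def
proof (intro allI impI)
  fix r c :: nat assume A: "\<forall>r<8. \<forall>c<8. A $ ix r $ ix c \<noteq> 0 \<longrightarrow> ((r < 4) = ((c < 4) = b))"
    and B: "\<forall>r<8. \<forall>c<8. B $ ix r $ ix c \<noteq> 0 \<longrightarrow> ((r < 4) = ((c < 4) = b'))"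
    and rc: "r < 8" "c < 8" and nz: "(A ** B) $ ix r $ ix c \<noteq> 0"
  obtain k where k: "k < 8" "A $ ix r $ ix k * B $ ix k $ ix c \<noteq> 0"
    using sum_nz nz unfolding prod_entry by blast
  then have "(r < 4) = ((k < 4) = b)" "(k < 4) = ((c < 4) = b')" using A B rc by auto
  then show "(r < 4) = ((c < 4) = (b = b'))" by blast
qed

lemma blk_T: "blk b A \<Longrightarrow> blk b (transpose A)"
  unfolding blk_def transpose_def by auto

lemma closedG_Ib: "closedG Ib"
proof -
  have "blk True (mat 1 :: real^8^8)" unfolding blk_def by (auto simp: mat_def idx_inj[symmetric])
  moreover have "matrix_inv A \<in> Ib" if AI: "A \<in> Ib" for A
  proof -
    obtain b where o: "orthogonal_matrix A" and bb: "blk b A" using AI by (auto simp: Ib_def)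
    show ?thesis unfolding orth_inv[OF o] Ib_def using o blk_T[OF bb] by auto
  qed
  moreover have "A ** B \<in> Ib" if AB: "A \<in> Ib" "B \<in> Ib" for A B
  proof -
    obtain b b' where "orthogonal_matrix A" "blk b A" "orthogonal_matrix B" "blk b' B"
      using AB by (auto simp: Ib_def)
    then show ?thesis using blk_mult orthogonal_matrix_mul unfolding Ib_def by blast
  qed
  ultimately show ?thesis unfolding closedG_def Ib_def by (auto simp: orthogonal_matrix_id)
qed

lemma Ib_tb: "mk (tb L) \<in> O8D \<Longrightarrow> \<forall>r<8. \<forall>c<8. tb L r c \<noteq> 0 \<longrightarrow> ((r < 4) = ((c < 4) = b)) \<Longrightarrow> mk (tb L) \<in> Ib"
  unfolding Ib_def blk_def using orthG by auto

lemma X0_Ib: "X0 \<in> Ib" unfolding X0_tb by (rule Ib_tb[where b=False], rule X0_O8D[unfolded X0_tb], simp add: all8 tb_def tdefs)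
lemma CX01_Ib: "CX01 \<in> Ib" unfolding CX01_tb by (rule Ib_tb[where b=True], rule CX01_O8D[unfolded CX01_tb], simp add: all8 tb_def tdefs)
lemma K0123_Ib: "K0123 \<in> Ib" unfolding K0123_tb by (rule Ib_tb[where b=True], rule K0123_O8D[unfolded K0123_tb], simp add: all8 tb_def tdefs)
lemma K12_Ib: "K12 \<in> Ib" unfolding K12_tb by (rule Ib_tb[where b=True], rule K12_O8D[unfolded K12_tb], simp add: all8 tb_def tdefs)
lemma CCZ_Ib: "CCZ \<in> Ib" unfolding CCZ_tb by (rule Ib_tb[where b=True], rule CCZ_O8D[unfolded CCZ_tb], simp add: all8 tb_def tdefs)

lemma CCX12_notIb: "CCX12 \<notin> Ib"
proof
  assume "CCX12 \<in> Ib"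
  then obtain b where "blk b (mk (tb tCCX12))" unfolding Ib_def CCX12_tb by blast
  then have h: "\<forall>r<8. \<forall>c<8. tb tCCX12 r c \<noteq> 0 \<longrightarrow> ((r < 4) = ((c < 4) = b))"
    unfolding blk_def by simp
  have a: "tb tCCX12 3 7 \<noteq> 0" "tb tCCX12 0 0 \<noteq> 0" by (simp_all add: tb_def tCCX12_def)
  have "((3::nat) < 4) = (((7::nat) < 4) = b)" using h[rule_format, of 3 7] a(1) by simp
  moreover have "((0::nat) < 4) = (((0::nat) < 4) = b)" using h[rule_format, of 0 0] a(2) by simp
  ultimately show False by simp
qed

(* ---------- invariant 4: integrality ---------- *)
definition Iz :: "(real^8^8) set" where "Iz = {M. orthogonal_matrix M \<and> (\<forall>i j. M $ i $ j \<in> \<int>)}"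

lemma closedG_Iz: "closedG Iz"
proof -
  have "(mat 1 :: real^8^8) $ i $ j \<in> \<int>" for i j by (simp add: mat_def)
  moreover have "matrix_inv A \<in> Iz" if "A \<in> Iz" for A
  proof -
    have o: "orthogonal_matrix A" using that by (auto simp: Iz_def)
    have "orthogonal_matrix (transpose A)" using o by simp
    moreover have "\<forall>i j. transpose A $ i $ j \<in> \<int>" using that by (simp add: Iz_def transpose_def)
    ultimately show ?thesis by (simp add: Iz_def orth_inv[OF o])
  qed
  moreover have "A ** B \<in> Iz" if "A \<in> Iz" "B \<in> Iz" for A B
    using that orthogonal_matrix_mul
    by (auto simp: Iz_def matrix_matrix_mult_def intro!: Ints_sum Ints_mult)
  ultimately show ?thesis unfolding closedG_def Iz_def by (auto simp: orthogonal_matrix_id)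
qed

lemma Iz_tb: "mk (tb L) \<in> O8D \<Longrightarrow> \<forall>r<8. \<forall>c<8. tb L r c \<in> \<int> \<Longrightarrow> mk (tb L) \<in> Iz"
  unfolding Iz_def using orthG by auto

lemma X0_Iz: "X0 \<in> Iz" unfolding X0_tb by (rule Iz_tb, rule X0_O8D[unfolded X0_tb], simp add: all8 tb_def tdefs)
lemma CX01_Iz: "CX01 \<in> Iz" unfolding CX01_tb by (rule Iz_tb, rule CX01_O8D[unfolded CX01_tb], simp add: all8 tb_def tdefs)
lemma CCX12_Iz: "CCX12 \<in> Iz" unfolding CCX12_tb by (rule Iz_tb, rule CCX12_O8D[unfolded CCX12_tb], simp add: all8 tb_def tdefs)
lemma CCZ_Iz: "CCZ \<in> Iz" unfolding CCZ_tb by (rule Iz_tb, rule CCZ_O8D[unfolded CCZ_tb], simp add: all8 tb_def tdefs)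

lemma half_not_Int: "(1/2 :: real) \<notin> \<int>"
proof
  assume "(1/2 :: real) \<in> \<int>"
  then obtain n :: int where "1/2 = (of_int n :: real)" by (auto elim: Ints_cases)
  then have "(1::real) = of_int (2 * n)" by simp
  then have "1 = 2 * n" by (simp only: of_int_eq_1_iff[symmetric])
  then show False by presburger
qed

lemma K0123_notIz: "K0123 \<notin> Iz"
proof
  assume "K0123 \<in> Iz"
  then have "K0123 $ ix 0 $ ix 0 \<in> \<int>" by (simp add: Iz_def)
  then show False using half_not_Int by (simp add: K0123_tb tb_def tK0123_def)
qed

lemma K12_notIz: "K12 \<notin> Iz"
proof
  assume "K12 \<in> Iz"
  then have "K12 $ ix 0 $ ix 0 \<in> \<int>" by (simp add: Iz_def)
  then show False using half_not_Int by (simp add: K12_tb tb_def tK12_def)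
qed

definition E8 :: "(real^8) set" where
  "E8 = {v. \<exists>a::nat \<Rightarrow> int. v = mkv (\<lambda>r. of_int (a r) / 2) \<and> (\<forall>r<8. even (a r - a 0)) \<and> 4 dvd (\<Sum>r<8. a r)}"
definition Ie :: "(real^8^8) set" where
  "Ie = {M. orthogonal_matrix M \<and> (\<forall>v\<in>E8. M *v v \<in> E8) \<and> (\<forall>v\<in>E8. transpose M *v v \<in> E8)}"

lemma closedG_Ie: "closedG Ie"
proof -
  have "mat 1 \<in> Ie" by (simp add: Ie_def orthogonal_matrix_id transpose_mat)
  moreover have "matrix_inv A \<in> Ie" if AI: "A \<in> Ie" for A
  proof -
    have o: "orthogonal_matrix A" using AI by (simp add: Ie_def)
    show ?thesis unfolding orth_inv[OF o] using AI by (simp add: Ie_def del: transpose_matrix_vector)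
  qed
  moreover have "A ** B \<in> Ie" if AB: "A \<in> Ie" "B \<in> Ie" for A B
    using AB by (simp add: Ie_def orthogonal_matrix_mul matrix_vector_mul_assoc[symmetric] matrix_transpose_mul del: transpose_matrix_vector)
  ultimately show ?thesis unfolding closedG_def by blast
qed

lemma Ie_sym: "M \<in> O8D \<Longrightarrow> transpose M = M \<Longrightarrow> \<forall>v\<in>E8. M *v v \<in> E8 \<Longrightarrow> M \<in> Ie"
  unfolding Ie_def using orthG by (auto simp del: transpose_matrix_vector)

lemma perm_iff:
  assumes ok: "okp P" and inv: "\<forall>r<8. P ! (P ! r) = r" and r: "r < 8" and c: "c < 8"
  shows "(r = P ! c) = (c = P ! r)"
proof
  assume h: "r = P ! c" show "c = P ! r" unfolding h using inv c by simp
next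
  assume h: "c = P ! r" show "r = P ! c" unfolding h using inv r by simp
qed

lemma perm_E8:
  assumes ok: "okp P" and inv: "\<forall>r<8. P ! (P ! r) = r"
  shows "\<forall>v\<in>E8. perm_mat (pl P) *v v \<in> E8"
proof
  fix v assume "v \<in> E8"
  then obtain a where v: "v = mkv (\<lambda>r. of_int (a r) / 2)" and ev: "\<forall>r<8. even (a r - a 0)"
    and s4: "4 dvd (\<Sum>r<8. a r)" unfolding E8_def by blast
  have lt: "P ! r < 8" if "r < 8" for r using ok that by (simp add: okp_def)
  have act: "perm_mat (pl P) *v v = mkv (\<lambda>r. of_int (a (P ! r)) / 2)"
    unfolding v ptb mk_mulv
  proof (rule mkv_eqI, intro allI impI)
    fix r :: nat assume r: "r < 8"
    have "app (\<lambda>r c. if r = P ! c then 1 else 0) (\<lambda>r. of_int (a r) / 2) r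
        = (\<Sum>c<8. if c = P ! r then of_int (a c) / 2 else 0)"
      unfolding app_def
    proof (rule sum.cong)
      fix c assume "c \<in> {..<8::nat}"
      then have "(r = P ! c) = (c = P ! r)" using perm_iff[OF ok inv r] by simp
      then show "(if r = P ! c then 1 else 0) * (of_int (a c) / 2) = (if c = P ! r then of_int (a c) / 2 else (0::real))"
        by simp
    qed simp
    also have "\<dots> = of_int (a (P ! r)) / 2" using lt[OF r] by simp
    finally show "app (\<lambda>r c. if r = P ! c then 1 else 0) (\<lambda>r. of_int (a r) / 2) r = of_int (a (P ! r)) / 2" .
  qed
  have ev': "\<forall>r<8. even (a (P ! r) - a (P ! 0))"
  proof (intro allI impI)
    fix r :: nat assume r: "r < 8"
    have e1: "even (a (P ! r) - a 0)" using ev[rule_format, OF lt[OF r]] .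
    have e2: "even (a (P ! 0) - a 0)" using ev[rule_format, OF lt[of 0]] by simp
    have "a (P ! r) - a (P ! 0) = (a (P ! r) - a 0) - (a (P ! 0) - a 0)" by simp
    then show "even (a (P ! r) - a (P ! 0))" using e1 e2 by simp
  qed
  have b: "bij_betw (\<lambda>r. P ! r) {..<8} {..<8}"
  proof (rule bij_betwI[of _ _ _ "\<lambda>r. P ! r"])
    show "(!) P \<in> {..<8} \<rightarrow> {..<8}" using lt by auto
    show "(!) P \<in> {..<8} \<rightarrow> {..<8}" using lt by auto
    show "\<And>x. x \<in> {..<8} \<Longrightarrow> P ! (P ! x) = x" using inv by auto
    show "\<And>y. y \<in> {..<8} \<Longrightarrow> P ! (P ! y) = y" using inv by auto
  qed
  have sum': "(\<Sum>r<8. a (P ! r)) = (\<Sum>r<8. a r)"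
    using sum.reindex_bij_betw[OF b, of a] .
  have s4': "4 dvd (\<Sum>r<8. a (P ! r))" unfolding sum' by (rule s4)
  show "perm_mat (pl P) *v v \<in> E8" unfolding E8_def mem_Collect_eq
    by (rule exI[of _ "\<lambda>r. a (P ! r)"], intro conjI, rule act, rule ev', rule s4')
qed

lemma perm_sym:
  assumes ok: "okp P" and inv: "\<forall>r<8. P ! (P ! r) = r"
  shows "transpose (perm_mat (pl P)) = perm_mat (pl P)"
  unfolding ptb mk_transpose
proof (rule mk_eqI)
  fix r c :: nat assume "r < 8" "c < 8"
  then have "(c = P ! r) = (r = P ! c)" using perm_iff[OF ok inv] by simp
  then show "(if c = P ! r then 1 else 0) = (if r = P ! c then 1 else (0::real))" by simp
qed

lemma perm_Ie:
  assumes "perm_mat (pl P) \<in> O8D" "okp P" "\<forall>r<8. P ! (P ! r) = r"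
  shows "perm_mat (pl P) \<in> Ie"
  by (rule Ie_sym[OF assms(1) perm_sym[OF assms(2,3)] perm_E8[OF assms(2,3)]])

lemma X0_Ie: "X0 \<in> Ie" using X0_O8D unfolding X0_pl by (intro perm_Ie) (simp_all add: okp_def all8 gdefs)
lemma CX01_Ie: "CX01 \<in> Ie" using CX01_O8D unfolding CX01_pl by (intro perm_Ie) (simp_all add: okp_def all8 gdefs)
lemma CCX12_Ie: "CCX12 \<in> Ie" using CCX12_O8D unfolding CCX12_pl by (intro perm_Ie) (simp_all add: okp_def all8 gdefs)

lemma aux_even: "4 dvd (8 * x + 2 * (y::int)) \<Longrightarrow> even y" by presburger

lemma K12_E8: "\<forall>v\<in>E8. K12 *v v \<in> E8"
proof
  fix v assume "v \<in> E8"
  then have "\<exists>a. v = mkv (\<lambda>r. of_int (a r) / 2) \<and> (\<forall>r<8. even (a r - a 0)) \<and> 4 dvd (\<Sum>r<8. a r)"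
    unfolding E8_def by simp
  then obtain a where h: "v = mkv (\<lambda>r. of_int (a r) / 2) \<and> (\<forall>r<8. even (a r - a 0)) \<and> 4 dvd (\<Sum>r<8. a r)"
    by (rule exE)
  have v: "v = mkv (\<lambda>r. of_int (a r) / 2)" using h by (rule conjunct1)
  have ev: "\<forall>r<8. even (a r - a 0)" using h[THEN conjunct2, THEN conjunct1] .
  have s4: "4 dvd (\<Sum>r<8. a r)" using h[THEN conjunct2, THEN conjunct2] .
  define d where "d r = (a r - a 0) div 2" for r
  have da: "a r = a 0 + 2 * d r" if "r < 8" for r
  proof -
    have "2 * ((a r - a 0) div 2) = a r - a 0" using ev[rule_format, OF that] by (rule even_two_times_div_two)
    then show ?thesis unfolding d_def by linarith
  qed
  note dd = da[of 1] da[of 2] da[of 3] da[of 4] da[of 5] da[of 6] da[of 7]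
  have dr: "(of_int (a r) :: real) = of_int (a 0) + 2 * of_int (d r)" if "r < 8" for r
    using da[OF that] by simp
  note ddr = dr[of "Suc 0"] dr[of 1] dr[of 2] dr[of 3] dr[of 4] dr[of 5] dr[of 6] dr[of 7]
  define a' where "a' r = (if r = 0 then 2 * a 0 + d 1 + d 2 + d 3 else if r = 1 then - d 1 + d 2 - d 3
      else if r = 2 then d 1 - d 2 - d 3 else if r = 3 then - d 1 - d 2 + d 3
      else if r = 4 then 2 * a 0 + d 4 + d 5 + d 6 + d 7 else if r = 5 then d 4 - d 5 + d 6 - d 7
      else if r = 6 then d 4 + d 5 - d 6 - d 7 else d 4 - d 5 - d 6 + d 7)" for r :: nat
  have act: "K12 *v v = mkv (\<lambda>r. of_int (a' r) / 2)"
    unfolding v K12_tb mk_mulv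
    by (rule mkv_eqI, unfold all8 app_def sum8e) (simp add: tb_def tK12_def a'_def ddr, simp add: field_simps)
  have eq: "(\<Sum>r<8. a r) = 8 * a 0 + 2 * (d 1 + d 2 + d 3 + d 4 + d 5 + d 6 + d 7)"
    unfolding sum8e using dd by simp
  have pd: "even (d 1 + d 2 + d 3 + d 4 + d 5 + d 6 + d 7)"
    using s4 unfolding eq by (rule aux_even)
  define S where "S = d 1 + d 2 + d 3 + d 4 + d 5 + d 6 + d 7"
  have pS: "even S" using pd by (simp add: S_def)
  have e1: "a' 1 - a' 0 = 2 * (- a 0 - d 1 - d 3)" by (simp add: a'_def)
  have e2: "a' 2 - a' 0 = 2 * (- a 0 - d 2 - d 3)" by (simp add: a'_def)
  have e3: "a' 3 - a' 0 = 2 * (- a 0 - d 1 - d 2)" by (simp add: a'_def)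
  have e4: "a' 4 - a' 0 = S - 2 * (d 1 + d 2 + d 3)" by (simp add: a'_def S_def)
  have e5: "a' 5 - a' 0 = S - 2 * (a 0 + d 1 + d 2 + d 3 + d 5 + d 7)" by (simp add: a'_def S_def)
  have e6: "a' 6 - a' 0 = S - 2 * (a 0 + d 1 + d 2 + d 3 + d 6 + d 7)" by (simp add: a'_def S_def)
  have e7: "a' 7 - a' 0 = S - 2 * (a 0 + d 1 + d 2 + d 3 + d 5 + d 6)" by (simp add: a'_def S_def)
  have ev': "\<forall>r<8. even (a' r - a' 0)"
    unfolding all8 using pS by (simp only: e1 e2 e3 e4 e5 e6 e7) simp
  have s4': "4 dvd (\<Sum>r<8. a' r)"
  proof -
    have "(\<Sum>r<8. a' r) = 4 * (a 0 + d 4)" unfolding sum8e by (simp add: a'_def)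
    then show ?thesis by simp
  qed
  show "K12 *v v \<in> E8" unfolding E8_def mem_Collect_eq
    by (rule exI[of _ a'], intro conjI, rule act, rule ev', rule s4')
qed

lemma K12_Ie: "K12 \<in> Ie"
proof (rule Ie_sym[OF K12_O8D _ K12_E8])
  show "transpose K12 = K12" unfolding K12_tb mk_transpose
    by (rule mk_eq_all) (simp add: all8 tb_def tK12_def)
qed

lemma CCZ_notIe: "CCZ \<notin> Ie"
proof
  assume C: "CCZ \<in> Ie"
  have h: "mkv (\<lambda>r. of_int 1 / 2) \<in> E8" unfolding E8_def mem_Collect_eq
    by (rule exI[of _ "\<lambda>r. 1"]) (simp add: sum8e)
  have "CCZ *v mkv (\<lambda>r. of_int 1 / 2) \<in> E8" using C h unfolding Ie_def by blast
  then have "\<exists>a. mkv (app (tb tCCZ) (\<lambda>r. of_int 1 / 2)) = mkv (\<lambda>r. of_int (a r) / 2) \<and> (\<forall>r<8. even (a r - a 0)) \<and> 4 dvd (\<Sum>r<8. a r)"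
    unfolding E8_def CCZ_tb mk_mulv by simp
  then obtain a where e: "mkv (app (tb tCCZ) (\<lambda>r. of_int 1 / 2)) = mkv (\<lambda>r. of_int (a r) / 2)"
    and s4: "4 dvd (\<Sum>r<8. a r)" by blast
  have comp: "\<forall>r<8. app (tb tCCZ) (\<lambda>r. of_int 1 / 2) r = (if r = 7 then -1 else 1) / 2"
    unfolding all8 app_def sum8e by (simp add: tb_def tCCZ_def)
  have "a r = (if r = 7 then -1 else 1)" if r: "r < 8" for r
  proof -
    have "(of_int (a r) :: real) / 2 = (if r = 7 then -1 else 1) / 2"
      using mkv_eqD[OF e r] comp r by simp
    then have "(of_int (a r) :: real) = of_int (if r = 7 then -1 else 1)" by simp
    then show ?thesis by (simp only: of_int_eq_iff)
  qed
  then have "(\<Sum>r<8. a r) = 6" unfolding sum8e by simp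
  then show False using s4 by simp
qed

lemma notgen: "closedG I \<Longrightarrow> T \<subseteq> I \<Longrightarrow> y \<in> O8D \<Longrightarrow> y \<notin> I \<Longrightarrow> gen_group T \<noteq> O8D"
  using gen_least by blast

lemma S1_gen: "gen_group {X0, CX01, CCX12, K0123} = O8D"
proof -
  let ?S = "{X0, CX01, CCX12, K0123}"
  let ?G = "gen_group ?S"
  have sub: "?S \<subseteq> O8D" using X0_O8D CX01_O8D CCX12_O8D K0123_O8D by auto
  have GO: "?G \<subseteq> O8D" by (rule gen_least[OF closedG_O8D sub])
  have g: "X0 \<in> ?G" "CX01 \<in> ?G" "CCX12 \<in> ?G" "K0123 \<in> ?G" by (auto intro: gen_base)
  have b: "(\<forall>a<8. \<forall>b<8. Sw a b \<in> ?G) \<and> (\<forall>a<8. Dg a \<in> ?G)" by (rule set1_basic[OF closedG_gen g])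
  have "O8D \<subseteq> ?G" using generation[OF closedG_gen GO] b g(4) by blast
  then show ?thesis using GO by blast
qed

lemma S2_gen: "gen_group {X0, CX01, CCX12, K12, CCZ} = O8D"
proof -
  let ?S = "{X0, CX01, CCX12, K12, CCZ}"
  let ?G = "gen_group ?S"
  have sub: "?S \<subseteq> O8D" using X0_O8D CX01_O8D CCX12_O8D K12_O8D CCZ_O8D by auto
  have GO: "?G \<subseteq> O8D" by (rule gen_least[OF closedG_O8D sub])
  have g: "X0 \<in> ?G" "CX01 \<in> ?G" "CCX12 \<in> ?G" "K12 \<in> ?G" "CCZ \<in> ?G" by (auto intro: gen_base)
  have b: "(\<forall>a<8. \<forall>b<8. Sw a b \<in> ?G) \<and> (\<forall>a<8. Dg a \<in> ?G) \<and> K0123 \<in> ?G"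
    by (rule set2_basic[OF closedG_gen g])
  have "O8D \<subseteq> ?G" using generation[OF closedG_gen GO] b by blast
  then show ?thesis using GO by blast
qed

lemma S1_min: "\<forall>T. T \<subset> {X0, CX01, CCX12, K0123} \<longrightarrow> gen_group T \<noteq> O8D"
proof (intro allI impI)
  fix T assume T: "T \<subset> {X0, CX01, CCX12, K0123}"
  then obtain x where x: "x \<in> {X0, CX01, CCX12, K0123}" "x \<notin> T" by blast
  have Tsub: "\<And>t. t \<in> T \<Longrightarrow> (t = X0 \<or> t = CX01 \<or> t = CCX12 \<or> t = K0123) \<and> t \<noteq> x"
    using T x by blast
  consider "x = X0" | "x = CX01" | "x = CCX12" | "x = K0123" using x(1) by blast
  then show "gen_group T \<noteq> O8D"
  proof cases
    case 1
    have "T \<subseteq> Iw" using Tsub 1 CX01_Iw CCX12_Iw K0123_Iw by blast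
    then show ?thesis using notgen[OF closedG_Iw _ X0_O8D X0_notIw] by blast
  next
    case 2
    have "T \<subseteq> Is" using Tsub 2 X0_Is CCX12_Is K0123_Is by blast
    then show ?thesis using notgen[OF closedG_Is _ CX01_O8D CX01_notIs] by blast
  next
    case 3
    have "T \<subseteq> Ib" using Tsub 3 X0_Ib CX01_Ib K0123_Ib by blast
    then show ?thesis using notgen[OF closedG_Ib _ CCX12_O8D CCX12_notIb] by blast
  next
    case 4
    have "T \<subseteq> Iz" using Tsub 4 X0_Iz CX01_Iz CCX12_Iz by blast
    then show ?thesis using notgen[OF closedG_Iz _ K0123_O8D K0123_notIz] by blast
  qed
qed

lemma S2_min: "\<forall>T. T \<subset> {X0, CX01, CCX12, K12, CCZ} \<longrightarrow> gen_group T \<noteq> O8D"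
proof (intro allI impI)
  fix T assume T: "T \<subset> {X0, CX01, CCX12, K12, CCZ}"
  then obtain x where x: "x \<in> {X0, CX01, CCX12, K12, CCZ}" "x \<notin> T" by blast
  have Tsub: "\<And>t. t \<in> T \<Longrightarrow> (t = X0 \<or> t = CX01 \<or> t = CCX12 \<or> t = K12 \<or> t = CCZ) \<and> t \<noteq> x"
    using T x by blast
  consider "x = X0" | "x = CX01" | "x = CCX12" | "x = K12" | "x = CCZ" using x(1) by blast
  then show "gen_group T \<noteq> O8D"
  proof cases
    case 1
    have "T \<subseteq> Iw" using Tsub 1 CX01_Iw CCX12_Iw K12_Iw CCZ_Iw by blast
    then show ?thesis using notgen[OF closedG_Iw _ X0_O8D X0_notIw] by blast
  next
    case 2
    have "T \<subseteq> Is" using Tsub 2 X0_Is CCX12_Is K12_Is CCZ_Is by blast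
    then show ?thesis using notgen[OF closedG_Is _ CX01_O8D CX01_notIs] by blast
  next
    case 3
    have "T \<subseteq> Ib" using Tsub 3 X0_Ib CX01_Ib K12_Ib CCZ_Ib by blast
    then show ?thesis using notgen[OF closedG_Ib _ CCX12_O8D CCX12_notIb] by blast
  next
    case 4
    have "T \<subseteq> Iz" using Tsub 4 X0_Iz CX01_Iz CCX12_Iz CCZ_Iz by blast
    then show ?thesis using notgen[OF closedG_Iz _ K12_O8D K12_notIz] by blast
  next
    case 5
    have "T \<subseteq> Ie" using Tsub 5 X0_Ie CX01_Ie CCX12_Ie K12_Ie by blast
    then show ?thesis using notgen[OF closedG_Ie _ CCZ_O8D CCZ_notIe] by blast
  qed
qed

theorem theorem5:
  shows "minimal_generating_set {X0, CX01, CCX12, K0123} O8D \<and>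
         minimal_generating_set {X0, CX01, CCX12, K12, CCZ} O8D"
  unfolding minimal_generating_set_def using S1_gen S1_min S2_gen S2_min by blast

end
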